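(* Consider the dynamics on $\mathbb{R}^{|S|}\times\mathbb{R}^{|S|\times|A|}_{>0}$ $$\frac{dv_{s'}}{dt}=-\Big(v_{s'}-\frac1\alpha\sum_{s,a}K_{ass'}u_{sa}\Big),\ s'\in S,\qquad \frac{du_{sa}}{dt}=-u_{sa}\Big(\log\frac{u_{sa}}{\tilde u_s}-\frac1\tau\Big(r_{sa}-\sum_{s'}K_{ass'}v_{s'}\Big)\Big),\ (s,a)\in S\times A.$$ This dynamics converges globally to $(v^*,u^* )$, the unique saddle point of $\min_v\max_u E(v,u)$; i.e. $(v^*,u^* )$ is globally asymptotically stable.
   Context: Finite MDP: state space $S$, action space $A$, transition probabilities $P_{ass'}$ (with $\sum_{s'}P_{ass'}=1$), rewards $r_{sa}\ge0$, discount $\gamma\in(0,1)$, regularization $\tau>0$, and $\alpha>0$. $K_{ass'}=\delta_{ss'}-\gamma P_{ass'}$, $\tilde u_s=\sum_a u_{sa}$, and $E(v,u)=\frac{\alpha}{2}\sum_s v_s^2+\sum_{s,a}u_{sa}(r_{sa}-\sum_{s'}K_{ass'}v_{s'})-\tau\sum_{s,a}u_{sa}\log(u_{sa}/\tilde u_s)$. This min-max problem has a unique saddle point $(v^*,u^* )$. *)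

theory Defs
  imports "HOL-Analysis.Analysis"
begin

text \<open>Finite MDP: states of finite type 's, actions of finite type 'a.
  Transition probabilities P a s s' (sum over s' equals 1).\<close>

definition Kmat :: "real \<Rightarrow> ('a \<Rightarrow> 's \<Rightarrow> 's \<Rightarrow> real) \<Rightarrow> 'a \<Rightarrow> 's \<Rightarrow> 's \<Rightarrow> real" where
  "Kmat \<gamma> P a s s' = (if s = s' then 1 else 0) - \<gamma> * P a s s'"

definition utilde :: "('s \<Rightarrow> 'a::finite \<Rightarrow> real) \<Rightarrow> 's \<Rightarrow> real" where
  "utilde u s = (\<Sum>a\<in>UNIV. u s a)"

definition Efun :: "real \<Rightarrow> real \<Rightarrow> real \<Rightarrow> ('a::finite \<Rightarrow> 's::finite \<Rightarrow> 's \<Rightarrow> real)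
    \<Rightarrow> ('s \<Rightarrow> 'a \<Rightarrow> real) \<Rightarrow> ('s \<Rightarrow> real) \<Rightarrow> ('s \<Rightarrow> 'a \<Rightarrow> real) \<Rightarrow> real" where
  "Efun \<alpha> \<tau> \<gamma> P r v u =
     \<alpha> / 2 * (\<Sum>s\<in>UNIV. (v s)\<^sup>2)
     + (\<Sum>s\<in>UNIV. \<Sum>a\<in>UNIV. u s a * (r s a - (\<Sum>s'\<in>UNIV. Kmat \<gamma> P a s s' * v s')))
     - \<tau> * (\<Sum>s\<in>UNIV. \<Sum>a\<in>UNIV. u s a * ln (u s a / utilde u s))"

definition is_saddle :: "real \<Rightarrow> real \<Rightarrow> real \<Rightarrow> ('a::finite \<Rightarrow> 's::finite \<Rightarrow> 's \<Rightarrow> real)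
    \<Rightarrow> ('s \<Rightarrow> 'a \<Rightarrow> real) \<Rightarrow> ('s \<Rightarrow> real) \<Rightarrow> ('s \<Rightarrow> 'a \<Rightarrow> real) \<Rightarrow> bool" where
  "is_saddle \<alpha> \<tau> \<gamma> P r vs us \<longleftrightarrow>
     (\<forall>s a. us s a > 0) \<and>
     (\<forall>u. (\<forall>s a. u s a > 0) \<longrightarrow> Efun \<alpha> \<tau> \<gamma> P r vs u \<le> Efun \<alpha> \<tau> \<gamma> P r vs us) \<and>
     (\<forall>v. Efun \<alpha> \<tau> \<gamma> P r vs us \<le> Efun \<alpha> \<tau> \<gamma> P r v us)"

definition is_solution :: "real \<Rightarrow> real \<Rightarrow> real \<Rightarrow> ('a::finite \<Rightarrow> 's::finite \<Rightarrow> 's \<Rightarrow> real)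
    \<Rightarrow> ('s \<Rightarrow> 'a \<Rightarrow> real) \<Rightarrow> (real \<Rightarrow> 's \<Rightarrow> real) \<Rightarrow> (real \<Rightarrow> 's \<Rightarrow> 'a \<Rightarrow> real) \<Rightarrow> bool" where
  "is_solution \<alpha> \<tau> \<gamma> P r v u \<longleftrightarrow>
     (\<forall>t\<ge>0. \<forall>s a. u t s a > 0) \<and>
     (\<forall>t\<ge>0. \<forall>s'. ((\<lambda>x. v x s') has_real_derivative
         (- (v t s' - (1 / \<alpha>) * (\<Sum>s\<in>UNIV. \<Sum>a\<in>UNIV. Kmat \<gamma> P a s s' * u t s a))))
         (at t within {0..})) \<and>
     (\<forall>t\<ge>0. \<forall>s a. ((\<lambda>x. u x s a) has_real_derivative
         (- u t s a * (ln (u t s a / utilde (u t) s)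
             - (1 / \<tau>) * (r s a - (\<Sum>s'\<in>UNIV. Kmat \<gamma> P a s s' * v t s')))))
         (at t within {0..}))"

text \<open>Distance on the finite-dimensional state space (l1; all norms are equivalent).\<close>
definition state_dist :: "('s::finite \<Rightarrow> real) \<Rightarrow> ('s \<Rightarrow> 'a::finite \<Rightarrow> real)
    \<Rightarrow> ('s \<Rightarrow> real) \<Rightarrow> ('s \<Rightarrow> 'a \<Rightarrow> real) \<Rightarrow> real" where
  "state_dist v u v' u' = (\<Sum>s\<in>UNIV. \<bar>v s - v' s\<bar>) + (\<Sum>s\<in>UNIV. \<Sum>a\<in>UNIV. \<bar>u s a - u' s a\<bar>)"

end

theory Submission
  imports Defs
begin

lemma deriv_nonpos_dec:
  fixes f f' :: "real \<Rightarrow> real"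
  assumes der: "\<forall>t\<ge>0. (f has_real_derivative f' t) (at t within {0..})"
    and neg: "\<forall>t\<ge>0. f' t \<le> 0" and a: "0 \<le> a" "a \<le> b"
  shows "f b \<le> f a"
proof -
  have "\<exists>x\<in>{a..b}. f b - f a = (\<lambda>h. f' x * h) (b - a)"
  proof (rule mvt_very_simple[OF a(2)])
    fix x assume x: "a \<le> x" "x \<le> b"
    have "(f has_real_derivative f' x) (at x within {0..})" using der x a by auto
    then have "(f has_real_derivative f' x) (at x within {a..b})"
      by (rule has_field_derivative_subset) (use a in auto)
    then show "(f has_derivative (\<lambda>h. f' x * h)) (at x within {a..b})"
      by (simp add: has_field_derivative_def)
  qed
  then obtain x where x: "x \<in> {a..b}" "f b - f a = f' x * (b - a)" by auto
  have "f' x * (b - a) \<le> 0" using neg x a by (intro mult_nonpos_nonneg) auto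
  then show ?thesis using x by simp
qed

lemma deriv_bound_uc:
  fixes f f' :: "real \<Rightarrow> real"
  assumes der: "\<forall>t\<ge>0. (f has_real_derivative f' t) (at t within {0..})"
    and bd: "\<forall>t\<ge>0. \<bar>f' t\<bar> \<le> B"
  shows "uniformly_continuous_on {0..} f"
proof -
  have lip: "\<bar>f y - f x\<bar> \<le> B * \<bar>y - x\<bar>" if xy: "0 \<le> x" "0 \<le> y" for x y
  proof -
    have gen: "\<bar>f b - f a\<bar> \<le> B * (b - a)" if ab: "0 \<le> a" "a \<le> b" for a b
    proof -
      have "\<exists>x\<in>{a..b}. f b - f a = (\<lambda>h. f' x * h) (b - a)"
      proof (rule mvt_very_simple[OF ab(2)])
        fix x assume x: "a \<le> x" "x \<le> b"
        have "(f has_real_derivative f' x) (at x within {0..})" using der x ab by auto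
        then have "(f has_real_derivative f' x) (at x within {a..b})"
          by (rule has_field_derivative_subset) (use ab in auto)
        then show "(f has_derivative (\<lambda>h. f' x * h)) (at x within {a..b})"
          by (simp add: has_field_derivative_def)
      qed
      then obtain x where x: "x \<in> {a..b}" "f b - f a = f' x * (b - a)" by auto
      have "\<bar>f' x * (b - a)\<bar> = \<bar>f' x\<bar> * (b - a)" using ab by (simp add: abs_mult)
      also have "\<dots> \<le> B * (b - a)" using bd x ab by (intro mult_right_mono) auto
      finally show ?thesis using x by simp
    qed
    show ?thesis
    proof (cases "x \<le> y")
      case True then show ?thesis using gen[of x y] xy by simp
    next
      case False then show ?thesis using gen[of y x] xy by (simp add: abs_minus_commute)
    qed
  qed
  have B0: "B \<ge> 0" using bd by (meson abs_ge_zero order_trans order_refl)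
  show ?thesis unfolding uniformly_continuous_on_def
  proof (intro allI impI)
    fix e :: real assume e: "e > 0"
    show "\<exists>d>0. \<forall>x\<in>{0..}. \<forall>x'\<in>{0..}. dist x' x < d \<longrightarrow> dist (f x') (f x) < e"
    proof (intro exI[of _ "e / (B + 1)"] conjI ballI impI)
      show "e / (B + 1) > 0" using e B0 by simp
      fix x x' :: real assume "x \<in> {0..}" "x' \<in> {0..}" and d: "dist x' x < e / (B + 1)"
      then have "\<bar>f x' - f x\<bar> \<le> B * \<bar>x' - x\<bar>" using lip by auto
      also have "\<dots> \<le> (B + 1) * \<bar>x' - x\<bar>" by (simp add: mult_right_mono)
      also have "\<dots> < (B + 1) * (e / (B + 1))" using d B0 by (intro mult_strict_left_mono) (auto simp: dist_real_def)
      also have "\<dots> = e" using B0 by simp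
      finally show "dist (f x') (f x) < e" by (simp add: dist_real_def)
    qed
  qed
qed

lemma barbalat:
  fixes F F' \<phi> :: "real \<Rightarrow> real"
  assumes conv: "(F \<longlongrightarrow> l) at_top"
    and der: "\<forall>t\<ge>0. (F has_real_derivative F' t) (at t within {0..})"
    and uc: "uniformly_continuous_on {0..} \<phi>"
    and le: "\<forall>t\<ge>0. \<phi> t \<le> F' t" and e: "e > 0"
  shows "eventually (\<lambda>t. \<phi> t < e) at_top"
proof (rule ccontr)
  assume nev: "\<not> eventually (\<lambda>t. \<phi> t < e) at_top"
  obtain d where d: "d > 0" and dd: "\<forall>x\<in>{0..}. \<forall>x'\<in>{0..}. dist x' x < d \<longrightarrow> dist (\<phi> x') (\<phi> x) < e/2"
    using uc e unfolding uniformly_continuous_on_def by (metis half_gt_zero)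
  have "eventually (\<lambda>t. dist (F t) l < e * d / 8) at_top"
    using conv e d unfolding tendsto_iff by (metis divide_pos_pos mult_pos_pos zero_less_numeral)
  then obtain T where T: "\<And>t. t \<ge> T \<Longrightarrow> dist (F t) l < e * d / 8"
    by (auto simp: eventually_at_top_linorder)
  from nev obtain t where t: "t \<ge> max T 0" "\<not> \<phi> t < e"
    unfolding eventually_at_top_linorder by (metis max.cobounded1 max.cobounded2 order_trans)
  define b where "b = t + d/2"
  have tb: "t \<le> b" using d by (simp add: b_def)
  have "\<exists>x\<in>{t..b}. F b - F t = (\<lambda>h. F' x * h) (b - t)"
  proof (rule mvt_very_simple[OF tb])
    fix x assume x: "t \<le> x" "x \<le> b"
    have "(F has_real_derivative F' x) (at x within {0..})" using der x t by auto
    then have "(F has_real_derivative F' x) (at x within {t..b})"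
      by (rule has_field_derivative_subset) (use t in auto)
    then show "(F has_derivative (\<lambda>h. F' x * h)) (at x within {t..b})"
      by (simp add: has_field_derivative_def)
  qed
  then obtain x where x: "x \<in> {t..b}" "F b - F t = F' x * (b - t)" by auto
  have "dist x t < d" using x d by (auto simp: b_def dist_real_def)
  then have "dist (\<phi> x) (\<phi> t) < e/2" using dd x t by auto
  then have "\<bar>\<phi> x - \<phi> t\<bar> < e/2" by (simp add: dist_real_def)
  then have "\<phi> x > e/2" using t(2) by linarith
  moreover have "\<phi> x \<le> F' x" using le x t by auto
  ultimately have "F' x > e/2" by linarith
  then have "F' x * (d/2) > e/2 * (d/2)" using d by (intro mult_strict_right_mono) auto
  then have "F' x * (b - t) > e/2 * (d/2)" by (simp add: b_def)
  moreover have "dist (F b) l < e * d / 8" "dist (F t) l < e * d / 8" using T t tb by auto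
  ultimately have "F b - F t > e * d / 4" "\<bar>F b - l\<bar> < e * d / 8" "\<bar>F t - l\<bar> < e * d / 8"
    using x(2) by (auto simp: dist_real_def)
  then show False by linarith
qed

lemma hellinger:
  fixes p q :: "'a::finite \<Rightarrow> real"
  assumes p: "\<forall>a. p a > 0" and q: "\<forall>a. q a > 0" and sp: "(\<Sum>a\<in>UNIV. p a) = 1" and sq: "(\<Sum>a\<in>UNIV. q a) = 1"
  shows "(\<Sum>a\<in>UNIV. (sqrt (p a) - sqrt (q a))\<^sup>2) \<le> (\<Sum>a\<in>UNIV. p a * ln (p a / q a))"
proof -
  have tm: "(sqrt (p a) - sqrt (q a))\<^sup>2 + p a - q a \<le> p a * ln (p a / q a)" for a
  proof -
    have pa: "p a > 0" and qa: "q a > 0" using p q by auto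
    define z where "z = sqrt (q a) / sqrt (p a)"
    have z0: "z > 0" using pa qa by (simp add: z_def)
    have "ln z \<le> z - 1" using z0 by (rule ln_le_minus_one)
    have "p a / q a = inverse (z\<^sup>2)" using pa qa by (simp add: z_def power_divide)
    then have "ln (p a / q a) = - 2 * ln z" using z0 by (simp add: ln_inverse ln_realpow)
    then have "p a * ln (p a / q a) \<ge> p a * (- 2 * (z - 1))"
      using \<open>ln z \<le> z - 1\<close> pa by (intro mult_left_mono) auto
    moreover have "p a * (- 2 * (z - 1)) = 2 * p a - 2 * sqrt (p a) * sqrt (q a)"
    proof -
      have "p a * z = sqrt (p a) * sqrt (q a)" using pa
        by (simp add: z_def field_simps)
      then show ?thesis by (simp add: algebra_simps)
    qed
    moreover have "(sqrt (p a) - sqrt (q a))\<^sup>2 = p a + q a - 2 * sqrt (p a) * sqrt (q a)"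
      using pa qa by (simp add: power2_diff)
    ultimately show ?thesis by linarith
  qed
  have "(\<Sum>a\<in>UNIV. (sqrt (p a) - sqrt (q a))\<^sup>2 + p a - q a) \<le> (\<Sum>a\<in>UNIV. p a * ln (p a / q a))"
    by (intro sum_mono tm)
  moreover have "(\<Sum>a\<in>UNIV. (sqrt (p a) - sqrt (q a))\<^sup>2 + p a - q a)
      = (\<Sum>a\<in>UNIV. (sqrt (p a) - sqrt (q a))\<^sup>2) + (\<Sum>a\<in>UNIV. p a) - (\<Sum>a\<in>UNIV. q a)"
    by (simp add: sum.distrib sum_subtractf)
  ultimately show ?thesis using sp sq by simp
qed

locale mdp =
  fixes P :: "'a::finite \<Rightarrow> 's::finite \<Rightarrow> 's \<Rightarrow> real"
    and r :: "'s \<Rightarrow> 'a \<Rightarrow> real"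
    and \<gamma> \<tau> \<alpha> :: real
    and vs :: "'s \<Rightarrow> real" and us :: "'s \<Rightarrow> 'a \<Rightarrow> real"
  assumes P_nonneg: "\<And>a s s'. P a s s' \<ge> 0"
    and P_sum: "\<And>a s. (\<Sum>s'\<in>UNIV. P a s s') = 1"
    and gamma: "0 < \<gamma>" "\<gamma> < 1"
    and tau: "0 < \<tau>"
    and alpha: "0 < \<alpha>"
    and saddle: "is_saddle \<alpha> \<tau> \<gamma> P r vs us"
begin

definition wK :: "('s \<Rightarrow> 'a \<Rightarrow> real) \<Rightarrow> 's \<Rightarrow> real" where
  "wK y s' = (\<Sum>s\<in>UNIV. \<Sum>a\<in>UNIV. Kmat \<gamma> P a s s' * y s a)"

definition qf :: "('s \<Rightarrow> real) \<Rightarrow> 's \<Rightarrow> 'a \<Rightarrow> real" where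
  "qf x s a = r s a - (\<Sum>s'\<in>UNIV. Kmat \<gamma> P a s s' * x s')"

definition G :: "('s \<Rightarrow> 'a \<Rightarrow> real) \<Rightarrow> real" where
  "G y = (\<Sum>s\<in>UNIV. \<Sum>a\<in>UNIV. y s a * qf vs s a) - \<tau> * (\<Sum>s\<in>UNIV. \<Sum>a\<in>UNIV. y s a * ln (y s a / utilde y s))"

lemma us_pos: "us s a > 0"
  using saddle by (auto simp: is_saddle_def)

lemma utilde_pos: "(\<forall>s a. y s a > 0) \<Longrightarrow> utilde y s > 0"
  unfolding utilde_def by (intro sum_pos) auto

lemma E_vs: "Efun \<alpha> \<tau> \<gamma> P r vs y = \<alpha> / 2 * (\<Sum>s\<in>UNIV. (vs s)\<^sup>2) + G y"
  by (simp add: Efun_def G_def qf_def)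

lemma G_le: "(\<forall>s a. y s a > 0) \<Longrightarrow> G y \<le> G us"
proof -
  assume "\<forall>s a. y s a > 0"
  then have "Efun \<alpha> \<tau> \<gamma> P r vs y \<le> Efun \<alpha> \<tau> \<gamma> P r vs us"
    using saddle by (auto simp: is_saddle_def)
  then show ?thesis unfolding E_vs by simp
qed

lemma swap_K:
  "(\<Sum>s\<in>UNIV. \<Sum>a\<in>UNIV. y s a * (\<Sum>s'\<in>UNIV. Kmat \<gamma> P a s s' * x s')) = (\<Sum>s'\<in>UNIV. wK y s' * x s')"
proof -
  have "(\<Sum>s\<in>UNIV. \<Sum>a\<in>UNIV. y s a * (\<Sum>s'\<in>UNIV. Kmat \<gamma> P a s s' * x s'))
     = (\<Sum>s\<in>UNIV. \<Sum>a\<in>UNIV. \<Sum>s'\<in>UNIV. Kmat \<gamma> P a s s' * y s a * x s')"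
    by (simp add: sum_distrib_left mult_ac)
  also have "\<dots> = (\<Sum>s\<in>UNIV. \<Sum>s'\<in>UNIV. \<Sum>a\<in>UNIV. Kmat \<gamma> P a s s' * y s a * x s')"
    by (rule sum.cong[OF refl], rule sum.swap)
  also have "\<dots> = (\<Sum>s'\<in>UNIV. \<Sum>s\<in>UNIV. \<Sum>a\<in>UNIV. Kmat \<gamma> P a s s' * y s a * x s')"
    by (rule sum.swap)
  also have "\<dots> = (\<Sum>s'\<in>UNIV. wK y s' * x s')"
    by (simp add: wK_def sum_distrib_right)
  finally show ?thesis .
qed

lemma E_v: "Efun \<alpha> \<tau> \<gamma> P r x y = \<alpha> / 2 * (\<Sum>s\<in>UNIV. (x s)\<^sup>2)
   + (\<Sum>s\<in>UNIV. \<Sum>a\<in>UNIV. y s a * r s a) - (\<Sum>s'\<in>UNIV. wK y s' * x s')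
   - \<tau> * (\<Sum>s\<in>UNIV. \<Sum>a\<in>UNIV. y s a * ln (y s a / utilde y s))"
proof -
  have "(\<Sum>s\<in>UNIV. \<Sum>a\<in>UNIV. y s a * (r s a - (\<Sum>s'\<in>UNIV. Kmat \<gamma> P a s s' * x s')))
      = (\<Sum>s\<in>UNIV. \<Sum>a\<in>UNIV. y s a * r s a) - (\<Sum>s\<in>UNIV. \<Sum>a\<in>UNIV. y s a * (\<Sum>s'\<in>UNIV. Kmat \<gamma> P a s s' * x s'))"
    by (simp add: right_diff_distrib sum_subtractf)
  then show ?thesis unfolding Efun_def swap_K by simp
qed

lemma vs_eq: "\<alpha> * vs s' = wK us s'"
proof -
  define c where "c = wK us s' - \<alpha> * vs s'"
  define h where "h = c / \<alpha>"
  define x where "x = (\<lambda>s. vs s + (if s = s' then h else 0))"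
  have "Efun \<alpha> \<tau> \<gamma> P r vs us \<le> Efun \<alpha> \<tau> \<gamma> P r x us"
    using saddle by (auto simp: is_saddle_def)
  moreover have "(\<Sum>s\<in>UNIV. (x s)\<^sup>2) = (\<Sum>s\<in>UNIV. (vs s)\<^sup>2) + (2 * h * vs s' + h\<^sup>2)"
  proof -
    have "(\<Sum>s\<in>UNIV. (x s)\<^sup>2) = (\<Sum>s\<in>UNIV. (vs s)\<^sup>2 + (if s = s' then 2 * h * vs s' + h\<^sup>2 else 0))"
      by (rule sum.cong) (auto simp: x_def power2_eq_square algebra_simps)
    also have "\<dots> = (\<Sum>s\<in>UNIV. (vs s)\<^sup>2) + (2 * h * vs s' + h\<^sup>2)"
      by (simp add: sum.distrib)
    finally show ?thesis .
  qed
  moreover have "(\<Sum>s\<in>UNIV. wK us s * x s) = (\<Sum>s\<in>UNIV. wK us s * vs s) + wK us s' * h"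
  proof -
    have "(\<Sum>s\<in>UNIV. wK us s * x s) = (\<Sum>s\<in>UNIV. wK us s * vs s + (if s = s' then wK us s' * h else 0))"
      by (rule sum.cong) (auto simp: x_def algebra_simps)
    also have "\<dots> = (\<Sum>s\<in>UNIV. wK us s * vs s) + wK us s' * h"
      by (simp add: sum.distrib)
    finally show ?thesis .
  qed
  ultimately have "0 \<le> \<alpha> / 2 * (2 * h * vs s' + h\<^sup>2) - wK us s' * h"
    unfolding E_v by (simp add: algebra_simps)
  also have "\<alpha> / 2 * (2 * h * vs s' + h\<^sup>2) - wK us s' * h = - c\<^sup>2 / (2 * \<alpha>)"
    using alpha by (simp add: h_def c_def field_simps power2_eq_square)
  finally have "c\<^sup>2 \<le> 0" using alpha by (simp add: divide_le_0_iff)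
  then have "c = 0" by simp
  then show ?thesis by (simp add: c_def)
qed

end

context mdp begin

definition Vf :: "('s \<Rightarrow> real) \<Rightarrow> ('s \<Rightarrow> 'a \<Rightarrow> real) \<Rightarrow> 's \<Rightarrow> real" where
  "Vf x y s' = - (x s' - (1 / \<alpha>) * (\<Sum>s\<in>UNIV. \<Sum>a\<in>UNIV. Kmat \<gamma> P a s s' * y s a))"

definition Uf :: "('s \<Rightarrow> real) \<Rightarrow> ('s \<Rightarrow> 'a \<Rightarrow> real) \<Rightarrow> 's \<Rightarrow> 'a \<Rightarrow> real" where
  "Uf x y s a = - y s a * (ln (y s a / utilde y s) - (1 / \<tau>) * (r s a - (\<Sum>s'\<in>UNIV. Kmat \<gamma> P a s s' * x s')))"

definition pol :: "('s \<Rightarrow> 'a \<Rightarrow> real) \<Rightarrow> 's \<Rightarrow> 'a \<Rightarrow> real" where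
  "pol y s a = y s a / utilde y s"

definition Hel :: "('s \<Rightarrow> 'a \<Rightarrow> real) \<Rightarrow> real" where
  "Hel y = (\<Sum>s\<in>UNIV. utilde us s * (\<Sum>a\<in>UNIV. (sqrt (pol us s a) - sqrt (pol y s a))\<^sup>2))"

definition Dx :: "('s \<Rightarrow> real) \<Rightarrow> ('s \<Rightarrow> 'a \<Rightarrow> real) \<Rightarrow> real" where
  "Dx x y = \<alpha> * (\<Sum>s\<in>UNIV. (x s - vs s) * Vf x y s)
     + \<tau> * (\<Sum>s\<in>UNIV. \<Sum>a\<in>UNIV. (1 - us s a / y s a) * Uf x y s a)"

lemma pol_pos: "(\<forall>s a. y s a > 0) \<Longrightarrow> pol y s a > 0"
  using utilde_pos[of y s] by (simp add: pol_def)

lemma pol_sum: "(\<forall>s a. y s a > 0) \<Longrightarrow> (\<Sum>a\<in>UNIV. pol y s a) = 1"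
  using utilde_pos[of y s] by (simp add: pol_def utilde_def sum_divide_distrib[symmetric])

lemma wK_diff: "wK y s' - wK z s' = wK (\<lambda>s a. y s a - z s a) s'"
  by (simp add: wK_def right_diff_distrib sum_subtractf)

lemma us_pos_all: "\<forall>s a. us s a > 0" using us_pos by auto

lemma utilde_us_pos: "utilde us s > 0" using utilde_pos[OF us_pos_all] .

lemma F_s:
  assumes y: "\<forall>s a. y s a > 0"
  shows "utilde us s * (\<Sum>a\<in>UNIV. (sqrt (pol us s a) - sqrt (pol y s a))\<^sup>2)
       \<le> (\<Sum>a\<in>UNIV. us s a * ln (pol us s a)) - (\<Sum>a\<in>UNIV. us s a * ln (pol y s a))"
proof -
  have up: "utilde us s > 0" by (rule utilde_us_pos)
  have p1: "\<forall>a. pol us s a > 0" using pol_pos[OF us_pos_all] by blast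
  have p2: "\<forall>a. pol y s a > 0" using pol_pos[OF y] by blast
  have h: "(\<Sum>a\<in>UNIV. (sqrt (pol us s a) - sqrt (pol y s a))\<^sup>2) \<le> (\<Sum>a\<in>UNIV. pol us s a * ln (pol us s a / pol y s a))"
    by (rule hellinger[OF p1 p2 pol_sum[OF us_pos_all] pol_sum[OF y]])
  have "utilde us s * (\<Sum>a\<in>UNIV. (sqrt (pol us s a) - sqrt (pol y s a))\<^sup>2)
      \<le> utilde us s * (\<Sum>a\<in>UNIV. pol us s a * ln (pol us s a / pol y s a))"
    using up h by (intro mult_left_mono) auto
  also have "\<dots> = (\<Sum>a\<in>UNIV. us s a * (ln (pol us s a) - ln (pol y s a)))"
    unfolding sum_distrib_left
  proof (rule sum.cong[OF refl])
    fix a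
    have q1: "pol us s a > 0" and q2: "pol y s a > 0" using p1 p2 by auto
    have "ln (pol us s a / pol y s a) = ln (pol us s a) - ln (pol y s a)" using q1 q2 by (simp add: ln_div)
    moreover have "utilde us s * pol us s a = us s a" using up by (simp add: pol_def)
    ultimately show "utilde us s * (pol us s a * ln (pol us s a / pol y s a)) = us s a * (ln (pol us s a) - ln (pol y s a))"
      by (metis mult.assoc)
  qed
  also have "\<dots> = (\<Sum>a\<in>UNIV. us s a * ln (pol us s a)) - (\<Sum>a\<in>UNIV. us s a * ln (pol y s a))"
    by (simp add: right_diff_distrib sum_subtractf)
  finally show ?thesis .
qed

lemma F_part:
  assumes y: "\<forall>s a. y s a > 0"
  shows "Hel y \<le> (\<Sum>s\<in>UNIV. \<Sum>a\<in>UNIV. us s a * ln (pol us s a)) - (\<Sum>s\<in>UNIV. \<Sum>a\<in>UNIV. us s a * ln (pol y s a))"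
proof -
  have "Hel y \<le> (\<Sum>s\<in>UNIV. (\<Sum>a\<in>UNIV. us s a * ln (pol us s a)) - (\<Sum>a\<in>UNIV. us s a * ln (pol y s a)))"
    unfolding Hel_def by (rule sum_mono) (rule F_s[OF y])
  then show ?thesis by (simp add: sum_subtractf)
qed

lemma key:
  assumes y: "\<forall>s a. y s a > 0"
  shows "Dx x y \<le> - \<alpha> * (\<Sum>s\<in>UNIV. (x s - vs s)\<^sup>2) - \<tau> * Hel y"
proof -
  define d where "d s = x s - vs s" for s
  define X where "X = (\<Sum>s\<in>UNIV. d s * (wK y s - wK us s))"
  have A: "\<alpha> * (\<Sum>s\<in>UNIV. (x s - vs s) * Vf x y s) = - \<alpha> * (\<Sum>s\<in>UNIV. (x s - vs s)\<^sup>2) + X"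
  proof -
    have "\<alpha> * ((x s - vs s) * Vf x y s) = - \<alpha> * (x s - vs s)\<^sup>2 + d s * (wK y s - wK us s)" for s
    proof -
      have V: "Vf x y s = - (x s - wK y s / \<alpha>)" by (simp add: Vf_def wK_def)
      have W: "wK us s = \<alpha> * vs s" using vs_eq by simp
      show ?thesis unfolding V W d_def using alpha by (simp add: field_simps power2_eq_square)
    qed
    then have "\<alpha> * (\<Sum>s\<in>UNIV. (x s - vs s) * Vf x y s) = (\<Sum>s\<in>UNIV. - \<alpha> * (x s - vs s)\<^sup>2 + d s * (wK y s - wK us s))"
      by (simp add: sum_distrib_left)
    then show ?thesis by (simp add: X_def sum.distrib sum_distrib_left sum_subtractf sum_negf)
  qed
  have B: "\<tau> * (\<Sum>s\<in>UNIV. \<Sum>a\<in>UNIV. (1 - us s a / y s a) * Uf x y s a)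
      = (\<Sum>s\<in>UNIV. \<Sum>a\<in>UNIV. (y s a - us s a) * (qf x s a - \<tau> * ln (pol y s a)))"
  proof -
    have "\<tau> * ((1 - us s a / y s a) * Uf x y s a) = (y s a - us s a) * (qf x s a - \<tau> * ln (pol y s a))" for s a
    proof -
      have e1: "(1 - us s a / y s a) * (- y s a) = us s a - y s a" using y[rule_format, of s a] by (simp add: field_simps)
      have U: "Uf x y s a = - y s a * (ln (pol y s a) - (1/\<tau>) * qf x s a)" by (simp add: Uf_def pol_def qf_def)
      have "\<tau> * ((1 - us s a / y s a) * Uf x y s a) = \<tau> * (((1 - us s a / y s a) * (- y s a)) * (ln (pol y s a) - (1/\<tau>) * qf x s a))"
        by (simp only: U mult.assoc)
      also have "\<dots> = \<tau> * ((us s a - y s a) * (ln (pol y s a) - (1/\<tau>) * qf x s a))"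
        by (simp only: e1)
      also have "\<dots> = (y s a - us s a) * (qf x s a - \<tau> * ln (pol y s a))"
        using tau by (simp add: field_simps)
      finally show ?thesis .
    qed
    then show ?thesis by (simp add: sum_distrib_left)
  qed
  have C: "(\<Sum>s\<in>UNIV. \<Sum>a\<in>UNIV. (y s a - us s a) * (qf x s a - \<tau> * ln (pol y s a)))
     = (\<Sum>s\<in>UNIV. \<Sum>a\<in>UNIV. (y s a - us s a) * (qf vs s a - \<tau> * ln (pol y s a))) - X"
  proof -
    have q: "qf x s a = qf vs s a - (\<Sum>s'\<in>UNIV. Kmat \<gamma> P a s s' * d s')" for s a
      by (simp add: qf_def d_def right_diff_distrib sum_subtractf)
    have "(\<Sum>s\<in>UNIV. \<Sum>a\<in>UNIV. (y s a - us s a) * (qf x s a - \<tau> * ln (pol y s a)))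
       = (\<Sum>s\<in>UNIV. \<Sum>a\<in>UNIV. (y s a - us s a) * (qf vs s a - \<tau> * ln (pol y s a))
           - (y s a - us s a) * (\<Sum>s'\<in>UNIV. Kmat \<gamma> P a s s' * d s'))"
      unfolding q by (simp add: algebra_simps)
    also have "\<dots> = (\<Sum>s\<in>UNIV. \<Sum>a\<in>UNIV. (y s a - us s a) * (qf vs s a - \<tau> * ln (pol y s a)))
       - (\<Sum>s\<in>UNIV. \<Sum>a\<in>UNIV. (y s a - us s a) * (\<Sum>s'\<in>UNIV. Kmat \<gamma> P a s s' * d s'))"
      by (simp add: sum_subtractf)
    also have "(\<Sum>s\<in>UNIV. \<Sum>a\<in>UNIV. (y s a - us s a) * (\<Sum>s'\<in>UNIV. Kmat \<gamma> P a s s' * d s')) = X"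
      unfolding swap_K X_def wK_diff by (simp add: mult.commute)
    finally show ?thesis .
  qed
  have D: "(\<Sum>s\<in>UNIV. \<Sum>a\<in>UNIV. (y s a - us s a) * (qf vs s a - \<tau> * ln (pol y s a)))
     = G y - (\<Sum>s\<in>UNIV. \<Sum>a\<in>UNIV. us s a * qf vs s a) + \<tau> * (\<Sum>s\<in>UNIV. \<Sum>a\<in>UNIV. us s a * ln (pol y s a))"
  proof -
    have "(\<Sum>s\<in>UNIV. \<Sum>a\<in>UNIV. (y s a - us s a) * (qf vs s a - \<tau> * ln (pol y s a)))
       = (\<Sum>s\<in>UNIV. \<Sum>a\<in>UNIV. (y s a * qf vs s a - \<tau> * (y s a * ln (pol y s a))) - (us s a * qf vs s a - \<tau> * (us s a * ln (pol y s a))))"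
      by (simp add: algebra_simps)
    also have "\<dots> = (\<Sum>s\<in>UNIV. \<Sum>a\<in>UNIV. y s a * qf vs s a) - \<tau> * (\<Sum>s\<in>UNIV. \<Sum>a\<in>UNIV. y s a * ln (pol y s a))
        - ((\<Sum>s\<in>UNIV. \<Sum>a\<in>UNIV. us s a * qf vs s a) - \<tau> * (\<Sum>s\<in>UNIV. \<Sum>a\<in>UNIV. us s a * ln (pol y s a)))"
      by (simp add: sum_subtractf sum_distrib_left)
    finally show ?thesis by (simp add: G_def pol_def)
  qed
  have E: "G us = (\<Sum>s\<in>UNIV. \<Sum>a\<in>UNIV. us s a * qf vs s a) - \<tau> * (\<Sum>s\<in>UNIV. \<Sum>a\<in>UNIV. us s a * ln (pol us s a))"
    by (simp add: G_def pol_def)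
  have F: "Hel y \<le> (\<Sum>s\<in>UNIV. \<Sum>a\<in>UNIV. us s a * ln (pol us s a)) - (\<Sum>s\<in>UNIV. \<Sum>a\<in>UNIV. us s a * ln (pol y s a))"
    using F_part[OF y] .
  have "G y \<le> G us" using G_le[OF y] .
  have "Dx x y = - \<alpha> * (\<Sum>s\<in>UNIV. (x s - vs s)\<^sup>2) + G y - (\<Sum>s\<in>UNIV. \<Sum>a\<in>UNIV. us s a * qf vs s a)
      + \<tau> * (\<Sum>s\<in>UNIV. \<Sum>a\<in>UNIV. us s a * ln (pol y s a))"
    unfolding Dx_def A B C D by simp
  also have "\<dots> \<le> - \<alpha> * (\<Sum>s\<in>UNIV. (x s - vs s)\<^sup>2) - \<tau> * Hel y"
  proof -
    have "\<tau> * Hel y \<le> \<tau> * ((\<Sum>s\<in>UNIV. \<Sum>a\<in>UNIV. us s a * ln (pol us s a)) - (\<Sum>s\<in>UNIV. \<Sum>a\<in>UNIV. us s a * ln (pol y s a)))"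
      using F tau by (intro mult_left_mono) auto
    then show ?thesis using \<open>G y \<le> G us\<close> E by (simp add: right_diff_distrib)
  qed
  finally show ?thesis .
qed

end

definition fterm :: "real \<Rightarrow> real \<Rightarrow> real" where
  "fterm c y = c * (ln c - ln y) + y - c"

lemma fterm_ge_sq: assumes "c > 0" "y > 0" shows "(sqrt y - sqrt c)\<^sup>2 \<le> fterm c y"
proof -
  define z where "z = sqrt y / sqrt c"
  have z0: "z > 0" using assms by (simp add: z_def)
  have "ln z \<le> z - 1" using z0 by (rule ln_le_minus_one)
  have "ln y - ln c = ln (z\<^sup>2)" using assms by (simp add: z_def power_divide ln_div)
  also have "\<dots> = 2 * ln z" using z0 by (simp add: ln_realpow)
  finally have "c * (ln c - ln y) \<ge> c * (- 2 * (z - 1))"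
    using \<open>ln z \<le> z - 1\<close> assms by (intro mult_left_mono) auto
  moreover have "c * z = sqrt c * sqrt y" using assms
    by (simp add: z_def field_simps)
  moreover have "(sqrt y - sqrt c)\<^sup>2 = y + c - 2 * sqrt c * sqrt y"
    using assms by (simp add: power2_diff)
  ultimately show ?thesis unfolding fterm_def by (simp add: algebra_simps)
qed

lemma fterm_nonneg: "c > 0 \<Longrightarrow> y > 0 \<Longrightarrow> fterm c y \<ge> 0"
  using fterm_ge_sq[of c y] by (meson order_trans zero_le_power2)

lemma fterm_le_sq: assumes "c > 0" "y > 0" shows "fterm c y \<le> (y - c)\<^sup>2 / y"
proof -
  have "ln (c / y) \<le> c / y - 1" using assms by (intro ln_le_minus_one) simp
  then have "c * (ln c - ln y) \<le> c * (c / y - 1)" using assms by (simp add: ln_div mult_left_mono)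
  moreover have "c * (c / y - 1) + y - c = (y - c)\<^sup>2 / y" using assms
    by (simp add: field_simps power2_eq_square)
  ultimately show ?thesis unfolding fterm_def by linarith
qed

lemma fterm_lower: assumes "c > 0" "y > 0" "fterm c y \<le> B"
  shows "y \<ge> c * exp (- ((B + c) / c))"
proof -
  define X where "X = (B + c) / c"
  have "c * (ln c - ln y) \<le> B + c" using assms unfolding fterm_def by linarith
  then have "ln c - ln y \<le> X" using assms by (simp add: X_def field_simps)
  then have "ln c - X \<le> ln y" by linarith
  then have "exp (ln c - X) \<le> y" using assms by (metis exp_le_cancel_iff exp_ln)
  moreover have "exp (ln c - X) = c * exp (- X)" using assms by (simp add: exp_diff exp_minus divide_inverse)
  ultimately show ?thesis by (simp add: X_def)
qed

lemma fterm_upper: assumes "c > 0" "y > 0" "fterm c y \<le> B"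
  shows "\<bar>y - c\<bar> \<le> sqrt B * (2 * sqrt c + sqrt B)"
proof -
  have sq: "(sqrt y - sqrt c)\<^sup>2 \<le> B" using fterm_ge_sq assms by (meson order_trans)
  then have B0: "B \<ge> 0" by (meson order_trans zero_le_power2)
  have h: "\<bar>sqrt y - sqrt c\<bar> \<le> sqrt B" using sq by (metis real_sqrt_abs real_sqrt_le_mono)
  have "\<bar>y - c\<bar> = \<bar>sqrt y - sqrt c\<bar> * (sqrt y + sqrt c)"
  proof -
    have "(sqrt y - sqrt c) * (sqrt y + sqrt c) = sqrt y * sqrt y - sqrt c * sqrt c" by (simp add: algebra_simps)
    also have "\<dots> = y - c" using assms by (simp add: real_sqrt_mult_self)
    finally have "y - c = (sqrt y - sqrt c) * (sqrt y + sqrt c)" by simp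
    moreover have "sqrt y + sqrt c \<ge> 0" using assms by simp
    ultimately show ?thesis by (simp add: abs_mult)
  qed
  also have "\<dots> \<le> sqrt B * (2 * sqrt c + sqrt B)"
  proof (rule mult_mono)
    show "sqrt y + sqrt c \<le> 2 * sqrt c + sqrt B" using h by (simp add: abs_le_iff)
  qed (use h B0 assms in auto)
  finally show ?thesis .
qed

context mdp begin

definition Lf :: "('s \<Rightarrow> real) \<Rightarrow> ('s \<Rightarrow> 'a \<Rightarrow> real) \<Rightarrow> real" where
  "Lf x y = \<alpha> / 2 * (\<Sum>s\<in>UNIV. (x s - vs s)\<^sup>2) + \<tau> * (\<Sum>s\<in>UNIV. \<Sum>a\<in>UNIV. fterm (us s a) (y s a))"

lemma Lf_v: "\<alpha> / 2 * (x s - vs s)\<^sup>2 \<le> Lf x y" if "\<forall>s a. y s a > 0"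
proof -
  have "(x s - vs s)\<^sup>2 \<le> (\<Sum>s\<in>UNIV. (x s - vs s)\<^sup>2)" by (rule member_le_sum) auto
  moreover have "0 \<le> (\<Sum>s\<in>UNIV. \<Sum>a\<in>UNIV. fterm (us s a) (y s a))"
    using that us_pos by (intro sum_nonneg fterm_nonneg) auto
  ultimately have "\<alpha> / 2 * (x s - vs s)\<^sup>2 \<le> \<alpha> / 2 * (\<Sum>s\<in>UNIV. (x s - vs s)\<^sup>2)"
    "0 \<le> \<tau> * (\<Sum>s\<in>UNIV. \<Sum>a\<in>UNIV. fterm (us s a) (y s a))"
    using alpha tau by (auto intro: mult_left_mono)
  then show ?thesis unfolding Lf_def by linarith
qed

lemma Lf_u: "\<tau> * fterm (us s a) (y s a) \<le> Lf x y" if "\<forall>s a. y s a > 0"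
proof -
  have "fterm (us s a) (y s a) \<le> (\<Sum>a\<in>UNIV. fterm (us s a) (y s a))"
    using that us_pos by (intro member_le_sum fterm_nonneg) auto
  also have "\<dots> \<le> (\<Sum>s\<in>UNIV. \<Sum>a\<in>UNIV. fterm (us s a) (y s a))"
    using that us_pos by (intro member_le_sum sum_nonneg fterm_nonneg) auto
  finally have "\<tau> * fterm (us s a) (y s a) \<le> \<tau> * (\<Sum>s\<in>UNIV. \<Sum>a\<in>UNIV. fterm (us s a) (y s a))"
    using tau by (simp add: mult_left_mono)
  moreover have "0 \<le> (\<Sum>s\<in>UNIV. (x s - vs s)\<^sup>2)" by (simp add: sum_nonneg)
  moreover have "0 \<le> \<alpha> / 2 * (\<Sum>s\<in>UNIV. (x s - vs s)\<^sup>2)" using alpha by (simp add: sum_nonneg)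
  ultimately show ?thesis unfolding Lf_def by linarith
qed

lemma Hel_nonneg: "Hel y \<ge> 0"
  unfolding Hel_def using utilde_us_pos by (intro sum_nonneg mult_nonneg_nonneg) (auto simp: less_imp_le sum_nonneg)

lemma Hel_ge: "utilde us s * (sqrt (pol us s a) - sqrt (pol y s a))\<^sup>2 \<le> Hel y"
proof -
  have up: "\<forall>s. utilde us s > 0" using utilde_us_pos by blast
  have "utilde us s * (sqrt (pol us s a) - sqrt (pol y s a))\<^sup>2 \<le> utilde us s * (\<Sum>a\<in>UNIV. (sqrt (pol us s a) - sqrt (pol y s a))\<^sup>2)"
    using up by (intro mult_left_mono member_le_sum) (auto simp: less_imp_le)
  also have "\<dots> \<le> Hel y" unfolding Hel_def
    using up by (intro member_le_sum[where f = "\<lambda>s. utilde us s * (\<Sum>a\<in>UNIV. (sqrt (pol us s a) - sqrt (pol y s a))\<^sup>2)"])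
      (auto intro!: mult_nonneg_nonneg sum_nonneg simp: less_imp_le)
  finally show ?thesis .
qed

end

locale traj = mdp P r \<gamma> \<tau> \<alpha> vs us
  for P :: "'a::finite \<Rightarrow> 's::finite \<Rightarrow> 's \<Rightarrow> real" and r \<gamma> \<tau> \<alpha> vs us +
  fixes v :: "real \<Rightarrow> 's \<Rightarrow> real" and u :: "real \<Rightarrow> 's \<Rightarrow> 'a \<Rightarrow> real"
  assumes sol: "is_solution \<alpha> \<tau> \<gamma> P r v u"
begin

lemma u_pos: "t \<ge> 0 \<Longrightarrow> u t s a > 0"
  using sol by (auto simp: is_solution_def)

lemma v_der: "t \<ge> 0 \<Longrightarrow> ((\<lambda>x. v x s) has_real_derivative Vf (v t) (u t) s) (at t within {0..})"
  using sol by (auto simp: is_solution_def Vf_def)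

lemma u_der: "t \<ge> 0 \<Longrightarrow> ((\<lambda>x. u x s a) has_real_derivative Uf (v t) (u t) s a) (at t within {0..})"
  using sol by (auto simp: is_solution_def Uf_def)

definition L :: "real \<Rightarrow> real" where "L t = Lf (v t) (u t)"

lemma L_der: assumes t: "t \<ge> 0"
  shows "(L has_real_derivative Dx (v t) (u t)) (at t within {0..})"
proof -
  have fd: "((\<lambda>x. fterm (us s a) (u x s a)) has_real_derivative (1 - us s a / u t s a) * Uf (v t) (u t) s a) (at t within {0..})" for s a
  proof -
    have up: "u t s a > 0" using u_pos t by auto
    have l: "((\<lambda>x. ln (u x s a)) has_real_derivative (1 / u t s a) * Uf (v t) (u t) s a) (at t within {0..})"
      by (rule DERIV_chain2[OF DERIV_ln_divide[OF up] u_der[OF t]])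
    have "((\<lambda>x. us s a * (ln (us s a) - ln (u x s a)) + u x s a - us s a) has_real_derivative
       us s a * (0 - (1 / u t s a) * Uf (v t) (u t) s a) + Uf (v t) (u t) s a - 0) (at t within {0..})"
      by (intro DERIV_diff DERIV_add DERIV_cmult DERIV_const l u_der t)
    moreover have "us s a * (0 - (1 / u t s a) * Uf (v t) (u t) s a) + Uf (v t) (u t) s a - 0 = (1 - us s a / u t s a) * Uf (v t) (u t) s a"
      by (simp add: algebra_simps)
    ultimately show ?thesis unfolding fterm_def by simp
  qed
  have vd: "((\<lambda>x. (v x s - vs s)\<^sup>2) has_real_derivative 2 * (v t s - vs s) * Vf (v t) (u t) s) (at t within {0..})" for s
  proof -
    have d1: "((\<lambda>x. v x s - vs s) has_real_derivative Vf (v t) (u t) s - 0) (at t within {0..})"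
      by (intro DERIV_diff v_der t DERIV_const)
    have "((\<lambda>x. (v x s - vs s) * (v x s - vs s)) has_real_derivative
       (Vf (v t) (u t) s - 0) * (v t s - vs s) + (Vf (v t) (u t) s - 0) * (v t s - vs s)) (at t within {0..})"
      by (rule DERIV_mult[OF d1 d1])
    then show ?thesis by (simp add: power2_eq_square algebra_simps)
  qed
  have der: "(L has_real_derivative \<alpha> / 2 * (\<Sum>s\<in>UNIV. 2 * (v t s - vs s) * Vf (v t) (u t) s)
       + \<tau> * (\<Sum>s\<in>UNIV. \<Sum>a\<in>UNIV. (1 - us s a / u t s a) * Uf (v t) (u t) s a)) (at t within {0..})"
  proof -
    have s1: "((\<lambda>x. \<Sum>s\<in>UNIV. (v x s - vs s)\<^sup>2) has_real_derivative (\<Sum>s\<in>UNIV. 2 * (v t s - vs s) * Vf (v t) (u t) s)) (at t within {0..})"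
      by (rule DERIV_sum) (rule vd)
    have s2: "((\<lambda>x. \<Sum>s\<in>UNIV. \<Sum>a\<in>UNIV. fterm (us s a) (u x s a)) has_real_derivative
        (\<Sum>s\<in>UNIV. \<Sum>a\<in>UNIV. (1 - us s a / u t s a) * Uf (v t) (u t) s a)) (at t within {0..})"
      by (rule DERIV_sum, rule DERIV_sum, rule fd)
    show ?thesis unfolding L_def[abs_def] Lf_def by (intro DERIV_add DERIV_cmult s1 s2)
  qed
  have eq1: "\<alpha> / 2 * (\<Sum>s\<in>UNIV. 2 * (v t s - vs s) * Vf (v t) (u t) s) = \<alpha> * (\<Sum>s\<in>UNIV. (v t s - vs s) * Vf (v t) (u t) s)"
    unfolding sum_distrib_left by (rule sum.cong) (auto simp: algebra_simps)
  show ?thesis using der unfolding eq1 Dx_def .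
qed

lemma u_pos_all: "t \<ge> 0 \<Longrightarrow> \<forall>s a. u t s a > 0"
  using u_pos by auto

lemma Dx_le: "t \<ge> 0 \<Longrightarrow> Dx (v t) (u t) \<le> - \<alpha> * (\<Sum>s\<in>UNIV. (v t s - vs s)\<^sup>2) - \<tau> * Hel (u t)"
  by (rule key[OF u_pos_all])

lemma Dx_nonpos: "t \<ge> 0 \<Longrightarrow> Dx (v t) (u t) \<le> 0"
proof -
  assume t: "t \<ge> 0"
  have "0 \<le> \<alpha> * (\<Sum>s\<in>UNIV. (v t s - vs s)\<^sup>2)" using alpha by (simp add: sum_nonneg)
  moreover have "0 \<le> \<tau> * Hel (u t)" using tau Hel_nonneg by simp
  ultimately show ?thesis using Dx_le[OF t] by linarith
qed

lemma L_dec: "0 \<le> a \<Longrightarrow> a \<le> b \<Longrightarrow> L b \<le> L a"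
  by (rule deriv_nonpos_dec[where f' = "\<lambda>t. Dx (v t) (u t)"]) (use L_der Dx_nonpos in auto)

lemma L_le0: "t \<ge> 0 \<Longrightarrow> L t \<le> L 0"
  using L_dec by auto

lemma L_nonneg: assumes t: "t \<ge> 0" shows "L t \<ge> 0"
proof -
  have y: "\<forall>s a. u t s a > 0" using u_pos_all[OF t] .
  have h1: "\<alpha> / 2 * (v t s0 - vs s0)\<^sup>2 \<le> L t" for s0 unfolding L_def by (rule Lf_v[OF y])
  have h2: "0 \<le> \<alpha> / 2 * (v t s0 - vs s0)\<^sup>2" for s0 using alpha by simp
  show ?thesis using h1[of undefined] h2[of undefined] by linarith
qed

lemma L_conv: "\<exists>l. (L \<longlongrightarrow> l) at_top"
proof -
  define l where "l = Inf (L ` {0..})"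
  have bdd: "bdd_below (L ` {0..})" using L_nonneg by (auto intro!: bdd_belowI[of _ 0])
  have "(L \<longlongrightarrow> l) at_top"
  proof (rule decreasing_tendsto)
    show "eventually (\<lambda>n. l \<le> L n) at_top"
      unfolding eventually_at_top_linorder l_def using bdd by (auto intro!: exI[of _ 0] cInf_lower)
    fix x assume "l < x"
    have "\<exists>z\<in>L ` {0..}. z < x" using cInf_less_iff[OF _ bdd, of x] \<open>l < x\<close> unfolding l_def by blast
    then obtain t0 where t0: "t0 \<in> {0..}" "L t0 < x" by blast
    show "eventually (\<lambda>n. L n < x) at_top"
      unfolding eventually_at_top_linorder
    proof (intro exI[of _ t0] allI impI)
      fix n assume "t0 \<le> n"
      then have "L n \<le> L t0" using L_dec t0 by simp
      then show "L n < x" using t0 by linarith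
    qed
  qed
  then show ?thesis ..
qed

end

lemma uc_pair:
  fixes f g :: "real \<Rightarrow> real"
  assumes f: "uniformly_continuous_on S f" and g: "uniformly_continuous_on S g"
  shows "uniformly_continuous_on S (\<lambda>x. (f x, g x))"
  unfolding uniformly_continuous_on_def
proof (intro allI impI)
  fix e :: real assume e: "e > 0"
  obtain d1 where d1: "d1 > 0" "\<forall>x\<in>S. \<forall>x'\<in>S. dist x' x < d1 \<longrightarrow> dist (f x') (f x) < e/2"
    using f[unfolded uniformly_continuous_on_def, rule_format, of "e/2"] e by auto
  obtain d2 where d2: "d2 > 0" "\<forall>x\<in>S. \<forall>x'\<in>S. dist x' x < d2 \<longrightarrow> dist (g x') (g x) < e/2"
    using g[unfolded uniformly_continuous_on_def, rule_format, of "e/2"] e by auto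
  show "\<exists>d>0. \<forall>x\<in>S. \<forall>x'\<in>S. dist x' x < d \<longrightarrow> dist (f x', g x') (f x, g x) < e"
  proof (intro exI[of _ "min d1 d2"] conjI ballI impI)
    show "min d1 d2 > 0" using d1 d2 by simp
    fix x x' assume xs: "x \<in> S" "x' \<in> S" and dx: "dist x' x < min d1 d2"
    have a: "dist (f x') (f x) < e/2" using d1 xs dx by auto
    have b: "dist (g x') (g x) < e/2" using d2 xs dx by auto
    have "dist (f x', g x') (f x, g x) = sqrt ((dist (f x') (f x))\<^sup>2 + (dist (g x') (g x))\<^sup>2)"
      by (simp add: dist_prod_def)
    also have "\<dots> \<le> \<bar>dist (f x') (f x)\<bar> + \<bar>dist (g x') (g x)\<bar>" by (rule sqrt_sum_squares_le_sum_abs)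
    also have "\<dots> < e" using a b by simp
    finally show "dist (f x', g x') (f x, g x) < e" .
  qed
qed

lemma uc_subset:
  fixes g :: "'a::metric_space \<Rightarrow> 'b::metric_space"
  assumes "uniformly_continuous_on C g" "A \<subseteq> C" shows "uniformly_continuous_on A g"
  unfolding uniformly_continuous_on_def
proof (intro allI impI)
  fix e :: real assume e: "e > 0"
  obtain d where d: "d > 0" "\<forall>x\<in>C. \<forall>x'\<in>C. dist x' x < d \<longrightarrow> dist (g x') (g x) < e"
    using assms(1)[unfolded uniformly_continuous_on_def, rule_format, of e] e by auto
  show "\<exists>d>0. \<forall>x\<in>A. \<forall>x'\<in>A. dist x' x < d \<longrightarrow> dist (g x') (g x) < e"
    by (intro exI[of _ d] conjI ballI impI) (use d assms(2) in auto)
qed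

lemma uc_comp_compact:
  fixes f :: "real \<Rightarrow> 'b::metric_space" and g :: "'b \<Rightarrow> real"
  assumes f: "uniformly_continuous_on {0..} f" and fC: "\<forall>t\<ge>0. f t \<in> C" and C: "compact C"
    and g: "continuous_on C g"
  shows "uniformly_continuous_on {0..} (\<lambda>t. g (f t))"
proof (rule uniformly_continuous_on_compose[OF f])
  have "uniformly_continuous_on C g" by (rule compact_uniformly_continuous[OF g C])
  then show "uniformly_continuous_on (f ` {0..}) g"
    by (rule uc_subset) (use fC in auto)
qed

lemma tendsto_zero_from_ev:
  fixes \<phi> :: "real \<Rightarrow> real"
  assumes "\<forall>e>0. eventually (\<lambda>t. \<phi> t < e) at_top" and "eventually (\<lambda>t. 0 \<le> \<phi> t) at_top"
  shows "(\<phi> \<longlongrightarrow> 0) at_top"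
proof (rule order_tendstoI)
  fix a :: real assume "a < 0"
  then show "eventually (\<lambda>t. a < \<phi> t) at_top" using assms(2) by (auto elim: eventually_mono)
next
  fix a :: real assume "0 < a"
  then show "eventually (\<lambda>t. \<phi> t < a) at_top" using assms(1) by auto
qed

definition bnd :: "(real \<Rightarrow> real) \<Rightarrow> bool" where
  "bnd f \<longleftrightarrow> (\<exists>B. \<forall>t\<ge>0. \<bar>f t\<bar> \<le> B)"

lemma bnd_le: "(\<And>t. t \<ge> 0 \<Longrightarrow> \<bar>f t\<bar> \<le> B) \<Longrightarrow> bnd f"
  unfolding bnd_def by blast

lemma bnd_const: "bnd (\<lambda>t. c)"
  by (rule bnd_le[of _ "\<bar>c\<bar>"]) simp

lemma bnd_add: assumes "bnd f" "bnd g" shows "bnd (\<lambda>t. f t + g t)"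
proof -
  obtain B1 B2 where "\<forall>t\<ge>0. \<bar>f t\<bar> \<le> B1" "\<forall>t\<ge>0. \<bar>g t\<bar> \<le> B2" using assms unfolding bnd_def by blast
  then show ?thesis
  proof (intro bnd_le[of _ "B1 + B2"])
    fix t :: real assume b: "\<forall>t\<ge>0. \<bar>f t\<bar> \<le> B1" "\<forall>t\<ge>0. \<bar>g t\<bar> \<le> B2" and t: "t \<ge> 0"
    have "\<bar>f t + g t\<bar> \<le> \<bar>f t\<bar> + \<bar>g t\<bar>" by (rule abs_triangle_ineq)
    moreover have "\<bar>f t\<bar> \<le> B1" "\<bar>g t\<bar> \<le> B2" using b t by auto
    ultimately show "\<bar>f t + g t\<bar> \<le> B1 + B2" by linarith
  qed
qed

lemma bnd_minus: assumes "bnd f" shows "bnd (\<lambda>t. - f t)"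
  using assms unfolding bnd_def by simp

lemma bnd_diff: assumes "bnd f" "bnd g" shows "bnd (\<lambda>t. f t - g t)"
  using bnd_add[OF assms(1) bnd_minus[OF assms(2)]] by simp

lemma bnd_mult: assumes "bnd f" "bnd g" shows "bnd (\<lambda>t. f t * g t)"
proof -
  obtain B1 B2 where b: "\<forall>t\<ge>0. \<bar>f t\<bar> \<le> B1" "\<forall>t\<ge>0. \<bar>g t\<bar> \<le> B2" using assms unfolding bnd_def by blast
  show ?thesis
  proof (rule bnd_le[of _ "B1 * B2"])
    fix t :: real assume t: "t \<ge> 0"
    have "\<bar>f t * g t\<bar> = \<bar>f t\<bar> * \<bar>g t\<bar>" by (simp add: abs_mult)
    also have "\<dots> \<le> B1 * B2"
    proof -
      have h1: "\<bar>f t\<bar> \<le> B1" "\<bar>g t\<bar> \<le> B2" using b t by auto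
      have "0 \<le> B1" using h1(1) abs_ge_zero[of "f t"] by linarith
      then show ?thesis using h1 by (intro mult_mono) auto
    qed
    finally show "\<bar>f t * g t\<bar> \<le> B1 * B2" .
  qed
qed

lemma bnd_sum: "finite A \<Longrightarrow> (\<And>i. i \<in> A \<Longrightarrow> bnd (\<lambda>t. f i t)) \<Longrightarrow> bnd (\<lambda>t. \<Sum>i\<in>A. f i t)"
proof (induction A rule: finite_induct)
  case empty then show ?case by (simp add: bnd_const)
next
  case (insert x F)
  then show ?case by (simp add: bnd_add)
qed

lemma bnd_cong: "(\<And>t. t \<ge> 0 \<Longrightarrow> f t = g t) \<Longrightarrow> bnd g \<Longrightarrow> bnd f"
  unfolding bnd_def by auto

lemma bnd_ln: assumes "bnd f" "c > 0" "\<And>t. t \<ge> 0 \<Longrightarrow> c \<le> f t" shows "bnd (\<lambda>t. ln (f t))"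
proof -
  obtain B where b: "\<forall>t\<ge>0. \<bar>f t\<bar> \<le> B" using assms unfolding bnd_def by blast
  show ?thesis
  proof (rule bnd_le[of _ "\<bar>ln c\<bar> + \<bar>ln B\<bar>"])
    fix t :: real assume t: "t \<ge> 0"
    have ft: "c \<le> f t" "f t \<le> B" using assms(3)[OF t] b t by auto
    then have "ln c \<le> ln (f t)" "ln (f t) \<le> ln B" using assms(2) by auto
    then show "\<bar>ln (f t)\<bar> \<le> \<bar>ln c\<bar> + \<bar>ln B\<bar>" by linarith
  qed
qed

lemma bnd_uc:
  fixes f f' :: "real \<Rightarrow> real"
  assumes "\<forall>t\<ge>0. (f has_real_derivative f' t) (at t within {0..})" "bnd f'"
  shows "uniformly_continuous_on {0..} f"
proof -
  obtain B where "\<forall>t\<ge>0. \<bar>f' t\<bar> \<le> B" using assms(2) unfolding bnd_def by blast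
  then show ?thesis by (rule deriv_bound_uc[OF assms(1)])
qed

context traj begin

lemma v_near: assumes t: "t \<ge> 0" shows "\<bar>v t s - vs s\<bar> \<le> sqrt (2 * L 0 / \<alpha>)"
proof -
  have "\<alpha> / 2 * (v t s - vs s)\<^sup>2 \<le> L t" unfolding L_def by (rule Lf_v[OF u_pos_all[OF t]])
  then have "\<alpha> / 2 * (v t s - vs s)\<^sup>2 \<le> L 0" using L_le0[OF t] by linarith
  then have "(v t s - vs s)\<^sup>2 \<le> 2 * L 0 / \<alpha>" using alpha by (simp add: field_simps)
  then have "sqrt ((v t s - vs s)\<^sup>2) \<le> sqrt (2 * L 0 / \<alpha>)" by (rule real_sqrt_le_mono)
  then show ?thesis by simp
qed

lemma fterm_bd: assumes t: "t \<ge> 0" shows "fterm (us s a) (u t s a) \<le> L 0 / \<tau>"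
proof -
  have "\<tau> * fterm (us s a) (u t s a) \<le> L t" unfolding L_def by (rule Lf_u[OF u_pos_all[OF t]])
  then have "\<tau> * fterm (us s a) (u t s a) \<le> L 0" using L_le0[OF t] by linarith
  then show ?thesis using tau by (simp add: field_simps)
qed

definition lo :: "'s \<Rightarrow> 'a \<Rightarrow> real" where
  "lo s a = us s a * exp (- ((L 0 / \<tau> + us s a) / us s a))"

definition hi :: "'s \<Rightarrow> 'a \<Rightarrow> real" where
  "hi s a = us s a + sqrt (L 0 / \<tau>) * (2 * sqrt (us s a) + sqrt (L 0 / \<tau>))"

lemma lo_pos: "lo s a > 0"
  using us_pos[of s a] by (simp add: lo_def)

lemma u_lo: "t \<ge> 0 \<Longrightarrow> lo s a \<le> u t s a"
  unfolding lo_def by (rule fterm_lower[OF us_pos u_pos fterm_bd])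

lemma u_hi: "t \<ge> 0 \<Longrightarrow> u t s a \<le> hi s a"
  using fterm_upper[OF us_pos u_pos fterm_bd, of t s a] unfolding hi_def by linarith

lemma u_le_ut: assumes t: "t \<ge> 0" shows "u t s a \<le> utilde (u t) s"
  unfolding utilde_def using u_pos[OF t] by (intro member_le_sum) (auto simp: less_imp_le)

lemma ut_pos: "t \<ge> 0 \<Longrightarrow> utilde (u t) s > 0"
  by (rule utilde_pos[OF u_pos_all])

lemma ut_lo: "t \<ge> 0 \<Longrightarrow> lo s a \<le> utilde (u t) s"
  using u_lo[of t s a] u_le_ut[of t s a] by linarith

lemma bnd_v: "bnd (\<lambda>t. v t s)"
proof (rule bnd_le[of _ "\<bar>vs s\<bar> + sqrt (2 * L 0 / \<alpha>)"])
  fix t :: real assume "t \<ge> 0"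
  then have "\<bar>v t s - vs s\<bar> \<le> sqrt (2 * L 0 / \<alpha>)" by (rule v_near)
  then show "\<bar>v t s\<bar> \<le> \<bar>vs s\<bar> + sqrt (2 * L 0 / \<alpha>)" by linarith
qed

lemma bnd_u: "bnd (\<lambda>t. u t s a)"
proof (rule bnd_le[of _ "hi s a"])
  fix t :: real assume t: "t \<ge> 0"
  then show "\<bar>u t s a\<bar> \<le> hi s a" using u_pos[OF t, of s a] u_hi[OF t, of s a] by simp
qed

lemma bnd_ut: "bnd (\<lambda>t. utilde (u t) s)"
  unfolding utilde_def by (rule bnd_sum) (simp_all add: bnd_u)

lemma bnd_Vf: "bnd (\<lambda>t. Vf (v t) (u t) s)"
  unfolding Vf_def
  by (intro bnd_minus bnd_diff bnd_mult bnd_const bnd_sum bnd_v bnd_u) simp_all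

lemma bnd_Uf: "bnd (\<lambda>t. Uf (v t) (u t) s a)"
proof (rule bnd_cong)
  fix t :: real assume t: "t \<ge> 0"
  have "ln (u t s a / utilde (u t) s) = ln (u t s a) - ln (utilde (u t) s)"
    using u_pos[OF t, of s a] ut_pos[OF t, of s] by (simp add: ln_div)
  then show "Uf (v t) (u t) s a = - u t s a * ((ln (u t s a) - ln (utilde (u t) s))
      - (1 / \<tau>) * (r s a - (\<Sum>s'\<in>UNIV. Kmat \<gamma> P a s s' * v t s')))"
    by (simp add: Uf_def)
next
  have l1: "bnd (\<lambda>t. ln (u t s a))" by (rule bnd_ln[OF bnd_u lo_pos u_lo])
  have l2: "bnd (\<lambda>t. ln (utilde (u t) s))" by (rule bnd_ln[OF bnd_ut lo_pos ut_lo])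
  show "bnd (\<lambda>t. - u t s a * ((ln (u t s a) - ln (utilde (u t) s))
      - (1 / \<tau>) * (r s a - (\<Sum>s'\<in>UNIV. Kmat \<gamma> P a s s' * v t s'))))"
    by (intro bnd_minus bnd_diff bnd_mult bnd_const bnd_sum bnd_v bnd_u l1 l2) simp_all
qed

lemma uc_v: "uniformly_continuous_on {0..} (\<lambda>t. v t s)"
  by (rule bnd_uc[OF _ bnd_Vf]) (use v_der in auto)

lemma uc_u: "uniformly_continuous_on {0..} (\<lambda>t. u t s a)"
  by (rule bnd_uc[OF _ bnd_Uf]) (use u_der in auto)

lemma uc_ut: "uniformly_continuous_on {0..} (\<lambda>t. utilde (u t) s)"
  unfolding utilde_def by (intro uniformly_continuous_on_sum uc_u)

end

lemma ev_both_tendsto0: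
  fixes \<phi> :: "real \<Rightarrow> real"
  assumes "\<forall>e>0. eventually (\<lambda>t. \<phi> t < e) at_top" "\<forall>e>0. eventually (\<lambda>t. - \<phi> t < e) at_top"
  shows "(\<phi> \<longlongrightarrow> 0) at_top"
proof (rule order_tendstoI)
  fix a :: real assume "a < 0"
  then have "- a > 0" by simp
  then have "eventually (\<lambda>t. - \<phi> t < - a) at_top" using assms(2) by blast
  then show "eventually (\<lambda>t. a < \<phi> t) at_top" by (auto elim: eventually_mono)
next
  fix a :: real assume "0 < a"
  then show "eventually (\<lambda>t. \<phi> t < a) at_top" using assms(1) by auto
qed

lemma ev_ge0: "eventually (\<lambda>t::real. t \<ge> 0) at_top"
  by (rule eventually_ge_at_top)

context traj begin

lemma L_lim: obtains l0 where "(L \<longlongrightarrow> l0) at_top"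
  using L_conv by blast

lemma negL_der: "\<forall>t\<ge>0. ((\<lambda>t. - L t) has_real_derivative - Dx (v t) (u t)) (at t within {0..})"
  using L_der by (auto intro: DERIV_minus)

lemma barbalat_L:
  assumes uc: "uniformly_continuous_on {0..} \<phi>"
    and le: "\<And>t. t \<ge> 0 \<Longrightarrow> \<phi> t \<le> - Dx (v t) (u t)"
    and nn: "\<And>t. t \<ge> 0 \<Longrightarrow> 0 \<le> \<phi> t"
  shows "(\<phi> \<longlongrightarrow> 0) at_top"
proof -
  obtain l0 where l0: "(L \<longlongrightarrow> l0) at_top" by (rule L_lim)
  have "((\<lambda>t. - L t) \<longlongrightarrow> - l0) at_top" by (intro tendsto_minus l0)
  then have "\<forall>e>0. eventually (\<lambda>t. \<phi> t < e) at_top"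
    using barbalat[OF _ negL_der uc] le by blast
  moreover have "eventually (\<lambda>t. 0 \<le> \<phi> t) at_top"
    using ev_ge0 by (rule eventually_mono) (rule nn)
  ultimately show ?thesis by (rule tendsto_zero_from_ev)
qed

lemma v_conv: "((\<lambda>t. v t s) \<longlongrightarrow> vs s) at_top"
proof -
  define R where "R = sqrt (2 * L 0 / \<alpha>)"
  define \<phi> where "\<phi> t = \<alpha> * (v t s - vs s)\<^sup>2" for t
  have uc: "uniformly_continuous_on {0..} \<phi>"
    unfolding \<phi>_def
  proof (rule uc_comp_compact[OF uc_v, of s "{vs s - R .. vs s + R}" "\<lambda>z. \<alpha> * (z - vs s)\<^sup>2"])
    show "\<forall>t\<ge>0. v t s \<in> {vs s - R..vs s + R}"
    proof (intro allI impI)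
      fix t :: real assume "t \<ge> 0"
      then have "\<bar>v t s - vs s\<bar> \<le> R" unfolding R_def by (rule v_near)
      then have "v t s - vs s \<le> R" "- (v t s - vs s) \<le> R" by (simp_all only: abs_le_iff)
      then show "v t s \<in> {vs s - R..vs s + R}" by simp
    qed
  qed (auto intro!: continuous_intros)
  have le: "\<phi> t \<le> - Dx (v t) (u t)" if t: "t \<ge> 0" for t
  proof -
    have "(v t s - vs s)\<^sup>2 \<le> (\<Sum>s\<in>UNIV. (v t s - vs s)\<^sup>2)" by (rule member_le_sum) auto
    then have "\<phi> t \<le> \<alpha> * (\<Sum>s\<in>UNIV. (v t s - vs s)\<^sup>2)" unfolding \<phi>_def using alpha by (simp add: mult_left_mono)
    moreover have "0 \<le> \<tau> * Hel (u t)" using tau Hel_nonneg by simp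
    ultimately show ?thesis using Dx_le[OF t] by linarith
  qed
  have "(\<phi> \<longlongrightarrow> 0) at_top" by (rule barbalat_L[OF uc le]) (use alpha in \<open>auto simp: \<phi>_def\<close>)
  then have "((\<lambda>t. sqrt (\<phi> t / \<alpha>)) \<longlongrightarrow> sqrt (0 / \<alpha>)) at_top" using alpha by (intro tendsto_intros) auto
  moreover have "(\<lambda>t. sqrt (\<phi> t / \<alpha>)) = (\<lambda>t. \<bar>v t s - vs s\<bar>)"
    using alpha by (auto simp: \<phi>_def)
  ultimately have "((\<lambda>t. \<bar>v t s - vs s\<bar>) \<longlongrightarrow> 0) at_top" by simp
  then have "((\<lambda>t. v t s - vs s) \<longlongrightarrow> 0) at_top" by (simp only: tendsto_rabs_zero_iff)
  then show ?thesis by (rule LIM_zero_cancel)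
qed

lemma pol_conv: "((\<lambda>t. pol (u t) s a) \<longlongrightarrow> pol us s a) at_top"
proof -
  define c where "c = sqrt (pol us s a)"
  define N where "N = (\<Sum>a\<in>UNIV. hi s a)"
  define C where "C = {lo s a .. hi s a} \<times> {lo s a .. N}"
  define g where "g z = \<tau> * utilde us s * (c - sqrt (fst z / snd z))\<^sup>2" for z :: "real \<times> real"
  define \<phi> where "\<phi> t = g (u t s a, utilde (u t) s)" for t
  have up: "utilde us s > 0" by (rule utilde_us_pos)
  have uc: "uniformly_continuous_on {0..} \<phi>"
    unfolding \<phi>_def
  proof (rule uc_comp_compact[OF uc_pair[OF uc_u uc_ut], where C = C and g = g])
    show "\<forall>t\<ge>0. (u t s a, utilde (u t) s) \<in> C"
    proof (intro allI impI)
      fix t :: real assume t: "t \<ge> 0"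
      have "utilde (u t) s \<le> N" unfolding N_def utilde_def by (rule sum_mono) (rule u_hi[OF t])
      then show "(u t s a, utilde (u t) s) \<in> C" unfolding C_def using u_lo[OF t] u_hi[OF t] ut_lo[OF t] by auto
    qed
    show "compact C" unfolding C_def by (intro compact_Times compact_Icc)
    have "\<forall>z\<in>C. snd z \<noteq> 0" using lo_pos[of s a] unfolding C_def by fastforce
    then show "continuous_on C g" unfolding g_def by (intro continuous_intros) auto
  qed
  have le: "\<phi> t \<le> - Dx (v t) (u t)" if t: "t \<ge> 0" for t
  proof -
    have "utilde us s * (sqrt (pol us s a) - sqrt (pol (u t) s a))\<^sup>2 \<le> Hel (u t)" by (rule Hel_ge)
    then have "\<phi> t \<le> \<tau> * Hel (u t)" unfolding \<phi>_def g_def c_def pol_def using tau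
      by (simp add: mult.assoc mult_left_mono)
    moreover have "0 \<le> \<alpha> * (\<Sum>s\<in>UNIV. (v t s - vs s)\<^sup>2)" using alpha by (simp add: sum_nonneg)
    ultimately show ?thesis using Dx_le[OF t] by linarith
  qed
  have nn: "0 \<le> \<phi> t" for t unfolding \<phi>_def g_def using tau up by simp
  have "(\<phi> \<longlongrightarrow> 0) at_top" by (rule barbalat_L[OF uc le nn])
  then have "((\<lambda>t. sqrt (\<phi> t / (\<tau> * utilde us s))) \<longlongrightarrow> sqrt (0 / (\<tau> * utilde us s))) at_top" using tau up by (intro tendsto_intros) auto
  moreover have "(\<lambda>t. sqrt (\<phi> t / (\<tau> * utilde us s))) = (\<lambda>t. \<bar>c - sqrt (pol (u t) s a)\<bar>)"
    using tau up by (auto simp: \<phi>_def g_def pol_def)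
  ultimately have "((\<lambda>t. \<bar>c - sqrt (pol (u t) s a)\<bar>) \<longlongrightarrow> 0) at_top" by simp
  then have "((\<lambda>t. c - sqrt (pol (u t) s a)) \<longlongrightarrow> 0) at_top" by (simp only: tendsto_rabs_zero_iff)
  then have "((\<lambda>t. c - (c - sqrt (pol (u t) s a))) \<longlongrightarrow> c - 0) at_top" by (intro tendsto_intros)
  then have "((\<lambda>t. sqrt (pol (u t) s a)) \<longlongrightarrow> c) at_top" by simp
  then have "((\<lambda>t. (sqrt (pol (u t) s a))\<^sup>2) \<longlongrightarrow> c\<^sup>2) at_top" by (intro tendsto_intros)
  moreover have "c\<^sup>2 = pol us s a" unfolding c_def using pol_pos[OF us_pos_all, of s a] by simp
  ultimately have lim2: "((\<lambda>t. (sqrt (pol (u t) s a))\<^sup>2) \<longlongrightarrow> pol us s a) at_top" by simp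
  have ev: "eventually (\<lambda>t. (sqrt (pol (u t) s a))\<^sup>2 = pol (u t) s a) at_top"
  proof (rule eventually_mono[OF ev_ge0])
    fix t :: real assume "t \<ge> 0"
    then have "pol (u t) s a > 0" by (rule pol_pos[OF u_pos_all])
    then show "(sqrt (pol (u t) s a))\<^sup>2 = pol (u t) s a" by simp
  qed
  have "((\<lambda>t. (sqrt (pol (u t) s a))\<^sup>2) \<longlongrightarrow> pol us s a) at_top \<longleftrightarrow> ((\<lambda>t. pol (u t) s a) \<longlongrightarrow> pol us s a) at_top"
    by (rule tendsto_cong[OF ev])
  then show ?thesis using lim2 by blast
qed

lemma uc_Vf: "uniformly_continuous_on {0..} (\<lambda>t. Vf (v t) (u t) s)"
  unfolding Vf_def
  by (intro uniformly_continuous_on_minus uniformly_continuous_on_diff uniformly_continuous_on_cmul_left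
      uniformly_continuous_on_sum uc_v uc_u)

lemma Vf_conv: "((\<lambda>t. Vf (v t) (u t) s) \<longlongrightarrow> 0) at_top"
proof (rule ev_both_tendsto0)
  have d1: "\<forall>t\<ge>0. ((\<lambda>x. v x s) has_real_derivative Vf (v t) (u t) s) (at t within {0..})"
    using v_der by auto
  show "\<forall>e>0. eventually (\<lambda>t. Vf (v t) (u t) s < e) at_top"
    using barbalat[OF v_conv d1 uc_Vf] by auto
  have d2: "\<forall>t\<ge>0. ((\<lambda>x. - v x s) has_real_derivative - Vf (v t) (u t) s) (at t within {0..})"
    using v_der by (auto intro: DERIV_minus)
  have uc2: "uniformly_continuous_on {0..} (\<lambda>t. - Vf (v t) (u t) s)"
    by (intro uniformly_continuous_on_minus uc_Vf)
  have l2: "((\<lambda>t. - v t s) \<longlongrightarrow> - vs s) at_top" by (intro tendsto_minus v_conv)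
  show "\<forall>e>0. eventually (\<lambda>t. - Vf (v t) (u t) s < e) at_top"
    using barbalat[OF l2 d2 uc2] by auto
qed

lemma wK_conv: "((\<lambda>t. wK (u t) s') \<longlongrightarrow> wK us s') at_top"
proof -
  have eq: "wK (u t) s' = \<alpha> * (Vf (v t) (u t) s' + v t s')" for t
    using alpha by (simp add: Vf_def wK_def field_simps)
  have "((\<lambda>t. \<alpha> * (Vf (v t) (u t) s' + v t s')) \<longlongrightarrow> \<alpha> * (0 + vs s')) at_top"
    by (intro tendsto_intros Vf_conv v_conv)
  then show ?thesis unfolding eq using vs_eq[of s'] by simp
qed

end

context mdp begin

definition Qm :: "'s \<Rightarrow> 's \<Rightarrow> real" where
  "Qm s s' = (\<Sum>a\<in>UNIV. pol us s a * P a s s')"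

lemma Qm_nonneg: "Qm s s' \<ge> 0"
  unfolding Qm_def using pol_pos[OF us_pos_all] P_nonneg by (intro sum_nonneg mult_nonneg_nonneg) (auto simp: less_imp_le)

lemma Qm_sum: "(\<Sum>s'\<in>UNIV. Qm s s') = 1"
proof -
  have "(\<Sum>s'\<in>UNIV. Qm s s') = (\<Sum>a\<in>UNIV. \<Sum>s'\<in>UNIV. pol us s a * P a s s')"
    unfolding Qm_def by (rule sum.swap)
  also have "\<dots> = (\<Sum>a\<in>UNIV. pol us s a)" by (simp add: sum_distrib_left[symmetric] P_sum)
  also have "\<dots> = 1" by (rule pol_sum[OF us_pos_all])
  finally show ?thesis .
qed

definition Mst :: "'s \<Rightarrow> 's \<Rightarrow> real" where
  "Mst s s' = (\<Sum>a\<in>UNIV. pol us s a * Kmat \<gamma> P a s s')"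

lemma Mst_eq: "Mst s s' = (if s = s' then 1 else 0) - \<gamma> * Qm s s'"
proof -
  have "Mst s s' = (\<Sum>a\<in>UNIV. pol us s a * (if s = s' then 1 else 0) - \<gamma> * (pol us s a * P a s s'))"
    unfolding Mst_def Kmat_def by (rule sum.cong) (auto simp: algebra_simps)
  also have "\<dots> = (if s = s' then 1 else 0) * (\<Sum>a\<in>UNIV. pol us s a) - \<gamma> * Qm s s'"
    by (simp add: sum_subtractf sum_distrib_left[symmetric] sum_distrib_right[symmetric] Qm_def mult.commute)
  also have "\<dots> = (if s = s' then 1 else 0) - \<gamma> * Qm s s'" by (simp add: pol_sum[OF us_pos_all])
  finally show ?thesis .
qed

lemma contraction:
  fixes e :: "'s \<Rightarrow> real"
  shows "(1 - \<gamma>) * (\<Sum>s\<in>UNIV. \<bar>e s\<bar>) \<le> (\<Sum>s'\<in>UNIV. \<bar>\<Sum>s\<in>UNIV. e s * Mst s s'\<bar>)"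
proof -
  define y where "y s' = (\<Sum>s\<in>UNIV. e s * Mst s s')" for s'
  have y: "y s' = e s' - \<gamma> * (\<Sum>s\<in>UNIV. e s * Qm s s')" for s'
  proof -
    have "y s' = (\<Sum>s\<in>UNIV. (if s = s' then e s else 0) - \<gamma> * (e s * Qm s s'))"
      unfolding y_def Mst_eq by (rule sum.cong) (auto simp: algebra_simps)
    also have "\<dots> = e s' - \<gamma> * (\<Sum>s\<in>UNIV. e s * Qm s s')"
      by (simp add: sum_subtractf sum_distrib_left)
    finally show ?thesis .
  qed
  have pt: "\<bar>e s'\<bar> \<le> \<bar>y s'\<bar> + \<gamma> * (\<Sum>s\<in>UNIV. \<bar>e s\<bar> * Qm s s')" for s'
  proof -
    have "\<bar>\<Sum>s\<in>UNIV. e s * Qm s s'\<bar> \<le> (\<Sum>s\<in>UNIV. \<bar>e s * Qm s s'\<bar>)" by (rule sum_abs)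
    also have "\<dots> = (\<Sum>s\<in>UNIV. \<bar>e s\<bar> * Qm s s')" using Qm_nonneg by (simp add: abs_mult)
    finally have h: "\<bar>\<Sum>s\<in>UNIV. e s * Qm s s'\<bar> \<le> (\<Sum>s\<in>UNIV. \<bar>e s\<bar> * Qm s s')" .
    have "e s' = y s' + \<gamma> * (\<Sum>s\<in>UNIV. e s * Qm s s')" using y[of s'] by simp
    then have "\<bar>e s'\<bar> \<le> \<bar>y s'\<bar> + \<bar>\<gamma> * (\<Sum>s\<in>UNIV. e s * Qm s s')\<bar>" by (metis abs_triangle_ineq)
    also have "\<bar>\<gamma> * (\<Sum>s\<in>UNIV. e s * Qm s s')\<bar> = \<gamma> * \<bar>\<Sum>s\<in>UNIV. e s * Qm s s'\<bar>"
      using gamma by (simp add: abs_mult)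
    also have "\<gamma> * \<bar>\<Sum>s\<in>UNIV. e s * Qm s s'\<bar> \<le> \<gamma> * (\<Sum>s\<in>UNIV. \<bar>e s\<bar> * Qm s s')"
      using h gamma by (intro mult_left_mono) auto
    finally show ?thesis by simp
  qed
  have "(\<Sum>s'\<in>UNIV. \<bar>e s'\<bar>) \<le> (\<Sum>s'\<in>UNIV. \<bar>y s'\<bar> + \<gamma> * (\<Sum>s\<in>UNIV. \<bar>e s\<bar> * Qm s s'))"
    by (rule sum_mono) (rule pt)
  also have "\<dots> = (\<Sum>s'\<in>UNIV. \<bar>y s'\<bar>) + \<gamma> * (\<Sum>s\<in>UNIV. \<bar>e s\<bar> * (\<Sum>s'\<in>UNIV. Qm s s'))"
  proof -
    have "(\<Sum>s'\<in>UNIV. \<Sum>s\<in>UNIV. \<bar>e s\<bar> * Qm s s') = (\<Sum>s\<in>UNIV. \<Sum>s'\<in>UNIV. \<bar>e s\<bar> * Qm s s')"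
      by (rule sum.swap)
    then show ?thesis by (simp add: sum.distrib sum_distrib_left[symmetric])
  qed
  also have "\<dots> = (\<Sum>s'\<in>UNIV. \<bar>y s'\<bar>) + \<gamma> * (\<Sum>s\<in>UNIV. \<bar>e s\<bar>)" by (simp add: Qm_sum)
  finally show ?thesis unfolding y_def by (simp add: algebra_simps)
qed

lemma wK_pol: assumes y: "\<forall>s a. y s a > 0"
  shows "wK y s' = (\<Sum>s\<in>UNIV. utilde y s * (\<Sum>a\<in>UNIV. pol y s a * Kmat \<gamma> P a s s'))"
  unfolding wK_def sum_distrib_left
proof (intro sum.cong refl)
  fix s a
  have "utilde y s > 0" by (rule utilde_pos[OF y])
  then show "Kmat \<gamma> P a s s' * y s a = utilde y s * (pol y s a * Kmat \<gamma> P a s s')"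
    by (simp add: pol_def)
qed

end

context traj begin

lemma ut_conv: "((\<lambda>t. utilde (u t) s) \<longlongrightarrow> utilde us s) at_top"
proof -
  define ep where "ep s t = utilde (u t) s - utilde us s" for s t
  define D where "D s s' t = (\<Sum>a\<in>UNIV. (pol (u t) s a - pol us s a) * Kmat \<gamma> P a s s')" for s s' t
  define y where "y s' t = (\<Sum>s\<in>UNIV. ep s t * Mst s s')" for s' t
  have D0: "((\<lambda>t. D s s' t) \<longlongrightarrow> 0) at_top" for s s'
  proof -
    have "((\<lambda>t. D s s' t) \<longlongrightarrow> (\<Sum>a\<in>UNIV. (pol us s a - pol us s a) * Kmat \<gamma> P a s s')) at_top"
      unfolding D_def by (intro tendsto_intros pol_conv)
    then show ?thesis by simp
  qed
  have uD0: "((\<lambda>t. utilde (u t) s * D s s' t) \<longlongrightarrow> 0) at_top" for s s'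
  proof (rule tendsto_0_le[OF D0, where K = "\<Sum>a\<in>UNIV. hi s a"])
    show "eventually (\<lambda>t. norm (utilde (u t) s * D s s' t) \<le> norm (D s s' t) * (\<Sum>a\<in>UNIV. hi s a)) at_top"
    proof (rule eventually_mono[OF ev_ge0])
      fix t :: real assume t: "t \<ge> 0"
      have "utilde (u t) s \<le> (\<Sum>a\<in>UNIV. hi s a)" unfolding utilde_def by (rule sum_mono) (rule u_hi[OF t])
      moreover have "utilde (u t) s > 0" by (rule ut_pos[OF t])
      ultimately have h: "utilde (u t) s * \<bar>D s s' t\<bar> \<le> (\<Sum>a\<in>UNIV. hi s a) * \<bar>D s s' t\<bar>"
        by (intro mult_right_mono) auto
      have "norm (utilde (u t) s * D s s' t) = utilde (u t) s * \<bar>D s s' t\<bar>"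
        using ut_pos[OF t, of s] by (simp add: abs_mult)
      also have "\<dots> \<le> (\<Sum>a\<in>UNIV. hi s a) * \<bar>D s s' t\<bar>" by (rule h)
      also have "\<dots> = norm (D s s' t) * (\<Sum>a\<in>UNIV. hi s a)" by (simp add: mult.commute)
      finally show "norm (utilde (u t) s * D s s' t) \<le> norm (D s s' t) * (\<Sum>a\<in>UNIV. hi s a)" .
    qed
  qed
  have y0: "((\<lambda>t. y s' t) \<longlongrightarrow> 0) at_top" for s'
  proof -
    have ev: "eventually (\<lambda>t. (wK (u t) s' - wK us s') - (\<Sum>s\<in>UNIV. utilde (u t) s * D s s' t) = y s' t) at_top"
    proof (rule eventually_mono[OF ev_ge0])
      fix t :: real assume t: "t \<ge> 0"
      have w1: "wK (u t) s' = (\<Sum>s\<in>UNIV. utilde (u t) s * (\<Sum>a\<in>UNIV. pol (u t) s a * Kmat \<gamma> P a s s'))"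
        by (rule wK_pol[OF u_pos_all[OF t]])
      have w2: "wK us s' = (\<Sum>s\<in>UNIV. utilde us s * Mst s s')"
        unfolding Mst_def by (rule wK_pol[OF us_pos_all])
      have "(\<Sum>a\<in>UNIV. pol (u t) s a * Kmat \<gamma> P a s s') = Mst s s' + D s s' t" for s
        unfolding Mst_def D_def by (simp add: sum.distrib[symmetric] algebra_simps)
      then have "wK (u t) s' = (\<Sum>s\<in>UNIV. utilde (u t) s * Mst s s') + (\<Sum>s\<in>UNIV. utilde (u t) s * D s s' t)"
        unfolding w1 by (simp add: algebra_simps sum.distrib)
      then show "(wK (u t) s' - wK us s') - (\<Sum>s\<in>UNIV. utilde (u t) s * D s s' t) = y s' t"
        unfolding w2 y_def ep_def by (simp add: algebra_simps sum_subtractf)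
    qed
    have "((\<lambda>t. (wK (u t) s' - wK us s') - (\<Sum>s\<in>UNIV. utilde (u t) s * D s s' t)) \<longlongrightarrow> (wK us s' - wK us s') - (\<Sum>s\<in>UNIV. 0)) at_top"
    proof -
      have "((\<lambda>t. \<Sum>s\<in>UNIV. utilde (u t) s * D s s' t) \<longlongrightarrow> (\<Sum>s\<in>UNIV. 0)) at_top"
        using tendsto_sum[of UNIV "\<lambda>s t. utilde (u t) s * D s s' t" "\<lambda>s. 0" at_top] uD0 by simp
      then show ?thesis by (intro tendsto_intros wK_conv)
    qed
    then have "((\<lambda>t. (wK (u t) s' - wK us s') - (\<Sum>s\<in>UNIV. utilde (u t) s * D s s' t)) \<longlongrightarrow> 0) at_top" by simp
    then show ?thesis using tendsto_cong[OF ev] by blast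
  qed
  have Y0: "((\<lambda>t. \<Sum>s'\<in>UNIV. \<bar>y s' t\<bar>) \<longlongrightarrow> 0) at_top"
  proof -
    have a: "((\<lambda>t. \<bar>y s' t\<bar>) \<longlongrightarrow> 0) at_top" for s'
      using y0[of s'] by (simp only: tendsto_rabs_zero_iff)
    show ?thesis
      using tendsto_sum[of UNIV "\<lambda>s' t. \<bar>y s' t\<bar>" "\<lambda>s'. 0" at_top] a by simp
  qed
  have "((\<lambda>t. ep s t) \<longlongrightarrow> 0) at_top"
  proof (rule tendsto_0_le[OF Y0, where K = "1 / (1 - \<gamma>)"])
    show "eventually (\<lambda>t. norm (ep s t) \<le> norm (\<Sum>s'\<in>UNIV. \<bar>y s' t\<bar>) * (1 / (1 - \<gamma>))) at_top"
    proof (intro always_eventually allI)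
      fix t :: real
      have c: "(1 - \<gamma>) * (\<Sum>s\<in>UNIV. \<bar>ep s t\<bar>) \<le> (\<Sum>s'\<in>UNIV. \<bar>y s' t\<bar>)"
        unfolding y_def by (rule contraction)
      have "\<bar>ep s t\<bar> \<le> (\<Sum>s\<in>UNIV. \<bar>ep s t\<bar>)" by (rule member_le_sum) auto
      then have "(1 - \<gamma>) * \<bar>ep s t\<bar> \<le> (\<Sum>s'\<in>UNIV. \<bar>y s' t\<bar>)"
        using c gamma by (meson diff_gt_0_iff_gt mult_left_mono order_trans less_imp_le)
      then have "\<bar>ep s t\<bar> \<le> (\<Sum>s'\<in>UNIV. \<bar>y s' t\<bar>) / (1 - \<gamma>)"
        using gamma by (simp add: field_simps)
      moreover have "(\<Sum>s'\<in>UNIV. \<bar>y s' t\<bar>) \<ge> 0" by (simp add: sum_nonneg)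
      ultimately show "norm (ep s t) \<le> norm (\<Sum>s'\<in>UNIV. \<bar>y s' t\<bar>) * (1 / (1 - \<gamma>))" by simp
    qed
  qed
  then show ?thesis unfolding ep_def by (rule LIM_zero_cancel)
qed

lemma u_conv: "((\<lambda>t. u t s a) \<longlongrightarrow> us s a) at_top"
proof -
  have "((\<lambda>t. pol (u t) s a * utilde (u t) s) \<longlongrightarrow> pol us s a * utilde us s) at_top"
    by (intro tendsto_intros pol_conv ut_conv)
  moreover have "pol us s a * utilde us s = us s a" using utilde_us_pos[of s] by (simp add: pol_def)
  moreover have ev: "eventually (\<lambda>t. pol (u t) s a * utilde (u t) s = u t s a) at_top"
  proof (rule eventually_mono[OF ev_ge0])
    fix t :: real assume "t \<ge> 0"
    then have "utilde (u t) s > 0" by (rule ut_pos)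
    then show "pol (u t) s a * utilde (u t) s = u t s a" by (simp add: pol_def)
  qed
  ultimately show ?thesis using tendsto_cong[OF ev] by simp
qed

end

context mdp begin

definition Phi :: "real \<Rightarrow> real" where
  "Phi \<eta> = (\<Sum>s\<in>(UNIV::'s set). sqrt (2 * \<eta> / \<alpha>))
     + (\<Sum>s\<in>UNIV. \<Sum>a\<in>UNIV. sqrt (\<eta> / \<tau>) * (2 * sqrt (us s a) + sqrt (\<eta> / \<tau>)))"

definition Psi :: "real \<Rightarrow> real" where
  "Psi \<delta> = \<alpha> / 2 * (\<Sum>s\<in>(UNIV::'s set). \<delta>\<^sup>2) + \<tau> * (\<Sum>s\<in>UNIV. \<Sum>a\<in>UNIV. 2 * \<delta>\<^sup>2 / us s a)"

lemma Phi_lim: "(Phi \<longlongrightarrow> 0) (at_right 0)"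
proof -
  have "(Phi \<longlongrightarrow> Phi 0) (at_right 0)" unfolding Phi_def[abs_def]
    using alpha tau by (intro tendsto_intros) auto
  then show ?thesis by (simp add: Phi_def)
qed

lemma Psi_lim: "(Psi \<longlongrightarrow> 0) (at_right 0)"
proof -
  have nz: "\<And>s a. us s a \<noteq> 0" using us_pos by (metis less_irrefl)
  have "(Psi \<longlongrightarrow> Psi 0) (at_right 0)" unfolding Psi_def[abs_def]
    using nz by (intro tendsto_intros) auto
  then show ?thesis by (simp add: Psi_def)
qed

lemma Lf_small:
  assumes xd: "\<And>s. \<bar>x s - vs s\<bar> \<le> \<delta>" and yd: "\<And>s a. \<bar>y s a - us s a\<bar> \<le> \<delta>"
    and dh: "\<And>s a. \<delta> \<le> us s a / 2" and yp: "\<And>s a. y s a > 0"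
  shows "Lf x y \<le> Psi \<delta>"
proof -
  have d0: "0 \<le> \<delta>" using xd[of undefined] by linarith
  have a: "(x s - vs s)\<^sup>2 \<le> \<delta>\<^sup>2" for s
  proof -
    have "\<bar>x s - vs s\<bar>\<^sup>2 \<le> \<delta>\<^sup>2" using xd[of s] by (intro power_mono) auto
    then show ?thesis by simp
  qed
  have b: "fterm (us s a) (y s a) \<le> 2 * \<delta>\<^sup>2 / us s a" for s a
  proof -
    have up: "us s a > 0" by (rule us_pos)
    have "y s a \<ge> us s a / 2" using yd[of s a] dh[of s a] by (simp add: abs_le_iff)
    have sq: "(y s a - us s a)\<^sup>2 \<le> \<delta>\<^sup>2"
    proof -
      have "\<bar>y s a - us s a\<bar>\<^sup>2 \<le> \<delta>\<^sup>2" using yd[of s a] by (intro power_mono) auto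
      then show ?thesis by simp
    qed
    have "fterm (us s a) (y s a) \<le> (y s a - us s a)\<^sup>2 / y s a" by (rule fterm_le_sq[OF up yp])
    also have "\<dots> \<le> \<delta>\<^sup>2 / (us s a / 2)"
      by (rule frac_le) (use sq up \<open>y s a \<ge> us s a / 2\<close> in auto)
    also have "\<dots> = 2 * \<delta>\<^sup>2 / us s a" by simp
    finally show ?thesis .
  qed
  have "(\<Sum>s\<in>UNIV. (x s - vs s)\<^sup>2) \<le> (\<Sum>s\<in>(UNIV::'s set). \<delta>\<^sup>2)" by (rule sum_mono) (rule a)
  then have A: "\<alpha> / 2 * (\<Sum>s\<in>UNIV. (x s - vs s)\<^sup>2) \<le> \<alpha> / 2 * (\<Sum>s\<in>(UNIV::'s set). \<delta>\<^sup>2)"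
    using alpha by (intro mult_left_mono) auto
  have "(\<Sum>s\<in>UNIV. \<Sum>a\<in>UNIV. fterm (us s a) (y s a)) \<le> (\<Sum>s\<in>UNIV. \<Sum>a\<in>UNIV. 2 * \<delta>\<^sup>2 / us s a)"
    by (intro sum_mono b)
  then have B: "\<tau> * (\<Sum>s\<in>UNIV. \<Sum>a\<in>UNIV. fterm (us s a) (y s a)) \<le> \<tau> * (\<Sum>s\<in>UNIV. \<Sum>a\<in>UNIV. 2 * \<delta>\<^sup>2 / us s a)"
    using tau by (intro mult_left_mono) auto
  show ?thesis unfolding Lf_def Psi_def using A B by linarith
qed

end

context traj begin

lemma dist_bound:
  assumes t: "t \<ge> 0" and eta: "L 0 \<le> \<eta>"
  shows "state_dist (v t) (u t) vs us \<le> Phi \<eta>"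
proof -
  have vb: "\<bar>v t s - vs s\<bar> \<le> sqrt (2 * \<eta> / \<alpha>)" for s
  proof -
    have "\<bar>v t s - vs s\<bar> \<le> sqrt (2 * L 0 / \<alpha>)" by (rule v_near[OF t])
    also have "\<dots> \<le> sqrt (2 * \<eta> / \<alpha>)" using eta alpha by (intro real_sqrt_le_mono divide_right_mono) auto
    finally show ?thesis .
  qed
  have ub: "\<bar>u t s a - us s a\<bar> \<le> sqrt (\<eta> / \<tau>) * (2 * sqrt (us s a) + sqrt (\<eta> / \<tau>))" for s a
  proof -
    have "fterm (us s a) (u t s a) \<le> L 0 / \<tau>" by (rule fterm_bd[OF t])
    also have "\<dots> \<le> \<eta> / \<tau>" using eta tau by (intro divide_right_mono) auto
    finally show ?thesis by (rule fterm_upper[OF us_pos u_pos[OF t]])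
  qed
  have "(\<Sum>s\<in>UNIV. \<bar>v t s - vs s\<bar>) \<le> (\<Sum>s\<in>(UNIV::'s set). sqrt (2 * \<eta> / \<alpha>))" by (rule sum_mono) (rule vb)
  moreover have "(\<Sum>s\<in>UNIV. \<Sum>a\<in>UNIV. \<bar>u t s a - us s a\<bar>)
      \<le> (\<Sum>s\<in>UNIV. \<Sum>a\<in>UNIV. sqrt (\<eta> / \<tau>) * (2 * sqrt (us s a) + sqrt (\<eta> / \<tau>)))"
    by (intro sum_mono ub)
  ultimately show ?thesis unfolding state_dist_def Phi_def by linarith
qed

end

lemma stable_lemma:
  fixes P :: "'a::finite \<Rightarrow> 's::finite \<Rightarrow> 's \<Rightarrow> real"
  assumes m: "mdp P r \<gamma> \<tau> \<alpha> vs us" and e: "\<epsilon> > 0"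
  shows "\<exists>\<delta>>0. \<forall>v u. is_solution \<alpha> \<tau> \<gamma> P r v u \<longrightarrow>
            state_dist (v 0) (u 0) vs us < \<delta> \<longrightarrow>
            (\<forall>t\<ge>0. state_dist (v t) (u t) vs us < \<epsilon>)"
proof -
  interpret mdp P r \<gamma> \<tau> \<alpha> vs us by (rule m)
  have "eventually (\<lambda>\<eta>. Phi \<eta> < \<epsilon>) (at_right 0)" using order_tendstoD(2)[OF Phi_lim e] .
  then obtain b where b: "b > 0" "\<And>y. 0 < y \<Longrightarrow> y < b \<Longrightarrow> Phi y < \<epsilon>"
    unfolding eventually_at_right_field by auto
  define \<eta> where "\<eta> = b / 2"
  have eta: "\<eta> > 0" "Phi \<eta> < \<epsilon>" using b by (auto simp: \<eta>_def)
  have ev1: "eventually (\<lambda>\<delta>. Psi \<delta> < \<eta>) (at_right 0)" using order_tendstoD(2)[OF Psi_lim eta(1)] .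
  have ev2: "eventually (\<lambda>\<delta>. \<forall>s a. \<delta> < us s a / 2) (at_right (0::real))"
  proof (intro eventually_all_finite)
    fix s a
    have "((\<lambda>\<delta>::real. \<delta>) \<longlongrightarrow> 0) (at_right 0)" by (rule tendsto_ident_at)
    moreover have "0 < us s a / 2" using us_pos[of s a] by simp
    ultimately show "eventually (\<lambda>\<delta>. \<delta> < us s a / 2) (at_right 0)" by (rule order_tendstoD(2))
  qed
  have "eventually (\<lambda>\<delta>. Psi \<delta> < \<eta> \<and> (\<forall>s a. \<delta> < us s a / 2)) (at_right (0::real))"
    using ev1 ev2 by (rule eventually_conj)
  then obtain c where c: "c > 0" "\<And>y. 0 < y \<Longrightarrow> y < c \<Longrightarrow> Psi y < \<eta> \<and> (\<forall>s a. y < us s a / 2)"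
    unfolding eventually_at_right_field by auto
  define \<delta> where "\<delta> = c / 2"
  have hc: "Psi \<delta> < \<eta> \<and> (\<forall>s a. \<delta> < us s a / 2)" by (rule c(2)) (use c(1) in \<open>auto simp: \<delta>_def\<close>)
  have dl: "\<delta> > 0" "Psi \<delta> < \<eta>" "\<And>s a. \<delta> < us s a / 2" using c(1) hc by (auto simp: \<delta>_def)
  show ?thesis
  proof (intro exI[of _ \<delta>] conjI allI impI)
    show "\<delta> > 0" by (rule dl(1))
    fix v u t
    assume sol: "is_solution \<alpha> \<tau> \<gamma> P r v u" and d0: "state_dist (v 0) (u 0) vs us < \<delta>" and t: "(0::real) \<le> t"
    interpret tr: traj P r \<gamma> \<tau> \<alpha> vs us v u
      by (intro traj.intro m traj_axioms.intro sol)
    have s1: "(\<Sum>s\<in>UNIV. \<bar>v 0 s - vs s\<bar>) \<ge> 0" "(\<Sum>s\<in>UNIV. \<Sum>a\<in>UNIV. \<bar>u 0 s a - us s a\<bar>) \<ge> 0"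
      by (auto intro!: sum_nonneg)
    have xd: "\<bar>v 0 s - vs s\<bar> \<le> \<delta>" for s
    proof -
      have "\<bar>v 0 s - vs s\<bar> \<le> (\<Sum>s\<in>UNIV. \<bar>v 0 s - vs s\<bar>)" by (rule member_le_sum) auto
      then show ?thesis using d0 s1 unfolding state_dist_def by linarith
    qed
    have yd: "\<bar>u 0 s a - us s a\<bar> \<le> \<delta>" for s a
    proof -
      have "\<bar>u 0 s a - us s a\<bar> \<le> (\<Sum>a\<in>UNIV. \<bar>u 0 s a - us s a\<bar>)" by (rule member_le_sum) auto
      also have "\<dots> \<le> (\<Sum>s\<in>UNIV. \<Sum>a\<in>UNIV. \<bar>u 0 s a - us s a\<bar>)" by (rule member_le_sum) (auto intro: sum_nonneg)
      finally show ?thesis using d0 s1 unfolding state_dist_def by linarith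
    qed
    have "tr.L 0 \<le> Psi \<delta>" unfolding tr.L_def
      by (rule Lf_small[OF xd yd]) (use dl(3) tr.u_pos in \<open>auto simp: less_imp_le\<close>)
    then have "tr.L 0 \<le> \<eta>" using dl(2) by linarith
    then have "state_dist (v t) (u t) vs us \<le> Phi \<eta>" by (rule tr.dist_bound[OF t])
    then show "state_dist (v t) (u t) vs us < \<epsilon>" using eta(2) by linarith
  qed
qed

theorem theorem2p4:
  fixes P :: "'a::finite \<Rightarrow> 's::finite \<Rightarrow> 's \<Rightarrow> real"
    and r :: "'s \<Rightarrow> 'a \<Rightarrow> real"
    and \<gamma> \<tau> \<alpha> :: real
    and vs :: "'s \<Rightarrow> real" and us :: "'s \<Rightarrow> 'a \<Rightarrow> real"
  assumes P_nonneg: "\<And>a s s'. P a s s' \<ge> 0"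
    and P_sum: "\<And>a s. (\<Sum>s'\<in>UNIV. P a s s') = 1"
    and r_nonneg: "\<And>s a. r s a \<ge> 0"
    and gamma: "0 < \<gamma>" "\<gamma> < 1"
    and tau: "0 < \<tau>"
    and alpha: "0 < \<alpha>"
    and saddle: "is_saddle \<alpha> \<tau> \<gamma> P r vs us"
  shows "(\<forall>\<epsilon>>0. \<exists>\<delta>>0. \<forall>v u. is_solution \<alpha> \<tau> \<gamma> P r v u \<longrightarrow>
            state_dist (v 0) (u 0) vs us < \<delta> \<longrightarrow>
            (\<forall>t\<ge>0. state_dist (v t) (u t) vs us < \<epsilon>))
       \<and> (\<forall>v u. is_solution \<alpha> \<tau> \<gamma> P r v u \<longrightarrow>
            (\<forall>s. ((\<lambda>t. v t s) \<longlongrightarrow> vs s) at_top) \<and>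
            (\<forall>s a. ((\<lambda>t. u t s a) \<longlongrightarrow> us s a) at_top))"
proof -
  have m: "mdp P r \<gamma> \<tau> \<alpha> vs us"
    by (rule mdp.intro) (use P_nonneg P_sum gamma tau alpha saddle in auto)
  show ?thesis
  proof (rule conjI)
    show "\<forall>\<epsilon>>0. \<exists>\<delta>>0. \<forall>v u. is_solution \<alpha> \<tau> \<gamma> P r v u \<longrightarrow>
            state_dist (v 0) (u 0) vs us < \<delta> \<longrightarrow>
            (\<forall>t\<ge>0. state_dist (v t) (u t) vs us < \<epsilon>)"
      by (intro allI impI) (rule stable_lemma[OF m])
    show "\<forall>v u. is_solution \<alpha> \<tau> \<gamma> P r v u \<longrightarrow>
            (\<forall>s. ((\<lambda>t. v t s) \<longlongrightarrow> vs s) at_top) \<and>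
            (\<forall>s a. ((\<lambda>t. u t s a) \<longlongrightarrow> us s a) at_top)"
    proof (intro allI impI)
      fix v u assume sol: "is_solution \<alpha> \<tau> \<gamma> P r v u"
      interpret tr: traj P r \<gamma> \<tau> \<alpha> vs us v u
        by (intro traj.intro m traj_axioms.intro sol)
      show "(\<forall>s. ((\<lambda>t. v t s) \<longlongrightarrow> vs s) at_top) \<and> (\<forall>s a. ((\<lambda>t. u t s a) \<longlongrightarrow> us s a) at_top)"
        using tr.v_conv tr.u_conv by blast
    qed
  qed
qed

end
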